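(* Let $1<p<\infty$, let $a,b$ be as in the context, and let $w=(w_n)_{n\ge0}$ be nonzero complex numbers with $$\sup_{n\ge0}\Big|\frac{w_na_n}{a_{n+1}}\Big|<\infty\quad\text{and}\quad\limsup_{n\to\infty}\Big|\frac{b_n}{a_{n+1}}\Big|<1 .$$ Then the following are equivalent: (i) $F_w^*$ is hypercyclic on $(\ell^p_{a,b})^*$; (ii) there exist $\phi\in(\ell^p_{a,b})^*$, a nonzero $\psi\in(\ell^p_{a,b})^*$ and a strictly increasing sequence $(n_k)$ with $(F_w^* )^{n_k}\phi\to\psi$ weakly; (iii) there exist $\phi\in(\ell^p_{a,b})^*$, a nonzero $\psi\in(\ell^p_{a,b})^*$ and a strictly increasing sequence $(n_k)$ with $(F_w^* )^{n_k}\phi\to\psi$ in norm.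
   Context: Let $a=(a_n)_{n\ge0}$, $b=(b_n)_{n\ge0}$ be sequences of nonzero complex numbers with $\limsup_{n\to\infty}(|a_n|+|b_n|)^{1/n}<\infty$, and let $R=1/\limsup_{n}(|a_n|+|b_n|)^{1/n}\in(0,\infty]$. For $n\ge0$ let $f_n(z)=(a_n+b_nz)z^n$. For $1\le p<\infty$, $\ell^p_{a,b}$ is the space of analytic functions on $\{|z|<R\}$ of the form $f=\sum_{n\ge0}\lambda_nf_n$ with $(\lambda_n)\in\ell^p(\mathbb{N}_0)$ (the series converges locally uniformly on $\{|z|<R\}$ and the $\lambda_n$ are uniquely determined by $f$), normed by $\|f\|=(\sum_n|\lambda_n|^p)^{1/p}$. The weighted forward shift is $F_w\big(\sum_{n\ge0}\mu_nz^n\big)=\sum_{n\ge0}\mu_nw_nz^{n+1}$ (bounded on $\ell^p_{a,b}$ under the hypotheses); $F_w^*$ is its adjoint. Hypercyclic means having a dense orbit. *)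

theory Defs
  imports "HOL-Analysis.Analysis"
begin

type_synonym cfun = "complex \<Rightarrow> complex"
type_synonym cfunctional = "cfun \<Rightarrow> complex"

definition fab :: "(nat \<Rightarrow> complex) \<Rightarrow> (nat \<Rightarrow> complex) \<Rightarrow> nat \<Rightarrow> cfun" where
  "fab a b n z = (a n + b n * z) * z ^ n"

text \<open>The disc |z| < R with R = 1 / limsup (|a_n|+|b_n|)^(1/n) (R = infinity if the limsup is 0).\<close>
definition Rdisc :: "(nat \<Rightarrow> complex) \<Rightarrow> (nat \<Rightarrow> complex) \<Rightarrow> complex set" where
  "Rdisc a b = {z. ereal (cmod z) *
      limsup (\<lambda>n. ereal ((cmod (a n) + cmod (b n)) powr (1 / real n))) < 1}"

definition represents :: "(nat \<Rightarrow> complex) \<Rightarrow> (nat \<Rightarrow> complex) \<Rightarrow> real \<Rightarrow> (nat \<Rightarrow> complex) \<Rightarrow> cfun \<Rightarrow> bool" where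
  "represents a b p lam f \<longleftrightarrow>
     summable (\<lambda>n. cmod (lam n) powr p) \<and>
     (\<forall>z\<in>Rdisc a b. (\<lambda>n. lam n * fab a b n z) sums f z) \<and>
     (\<forall>z. z \<notin> Rdisc a b \<longrightarrow> f z = 0)"

definition lpab :: "(nat \<Rightarrow> complex) \<Rightarrow> (nat \<Rightarrow> complex) \<Rightarrow> real \<Rightarrow> cfun set" where
  "lpab a b p = {f. \<exists>lam. represents a b p lam f}"

definition coefs :: "(nat \<Rightarrow> complex) \<Rightarrow> (nat \<Rightarrow> complex) \<Rightarrow> real \<Rightarrow> cfun \<Rightarrow> nat \<Rightarrow> complex" where
  "coefs a b p f = (THE lam. represents a b p lam f)"

definition lpab_norm :: "(nat \<Rightarrow> complex) \<Rightarrow> (nat \<Rightarrow> complex) \<Rightarrow> real \<Rightarrow> cfun \<Rightarrow> real" where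
  "lpab_norm a b p f = (\<Sum>n. cmod (coefs a b p f n) powr p) powr (1 / p)"

definition taylor_coeff :: "cfun \<Rightarrow> nat \<Rightarrow> complex" where
  "taylor_coeff f n = (deriv ^^ n) f 0 / fact n"

definition Fw :: "(nat \<Rightarrow> complex) \<Rightarrow> (nat \<Rightarrow> complex) \<Rightarrow> (nat \<Rightarrow> complex) \<Rightarrow> cfun \<Rightarrow> cfun" where
  "Fw a b w f = (\<lambda>z. if z \<in> Rdisc a b
       then (\<Sum>n. taylor_coeff f n * w n * z ^ Suc n) else 0)"

definition dual :: "(nat \<Rightarrow> complex) \<Rightarrow> (nat \<Rightarrow> complex) \<Rightarrow> real \<Rightarrow> cfunctional set" where
  "dual a b p = {\<phi>.
     (\<forall>f\<in>lpab a b p. \<forall>g\<in>lpab a b p. \<phi> (\<lambda>z. f z + g z) = \<phi> f + \<phi> g) \<and>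
     (\<forall>c. \<forall>f\<in>lpab a b p. \<phi> (\<lambda>z. c * f z) = c * \<phi> f) \<and>
     (\<exists>C. \<forall>f\<in>lpab a b p. cmod (\<phi> f) \<le> C * lpab_norm a b p f) \<and>
     (\<forall>f. f \<notin> lpab a b p \<longrightarrow> \<phi> f = 0)}"

definition dual_norm :: "(nat \<Rightarrow> complex) \<Rightarrow> (nat \<Rightarrow> complex) \<Rightarrow> real \<Rightarrow> cfunctional \<Rightarrow> real" where
  "dual_norm a b p \<phi> = Sup {cmod (\<phi> f) | f. f \<in> lpab a b p \<and> lpab_norm a b p f \<le> 1}"

text \<open>Bounded linear functionals on the dual space (the bidual), for the weak topology.\<close>
definition bidual :: "(nat \<Rightarrow> complex) \<Rightarrow> (nat \<Rightarrow> complex) \<Rightarrow> real \<Rightarrow> (cfunctional \<Rightarrow> complex) set" where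
  "bidual a b p = {\<Lambda>.
     (\<forall>\<phi>\<in>dual a b p. \<forall>\<theta>\<in>dual a b p. \<Lambda> (\<lambda>f. \<phi> f + \<theta> f) = \<Lambda> \<phi> + \<Lambda> \<theta>) \<and>
     (\<forall>c. \<forall>\<phi>\<in>dual a b p. \<Lambda> (\<lambda>f. c * \<phi> f) = c * \<Lambda> \<phi>) \<and>
     (\<exists>C. \<forall>\<phi>\<in>dual a b p. cmod (\<Lambda> \<phi>) \<le> C * dual_norm a b p \<phi>)}"

definition Fw_adj :: "(nat \<Rightarrow> complex) \<Rightarrow> (nat \<Rightarrow> complex) \<Rightarrow> real \<Rightarrow> (nat \<Rightarrow> complex) \<Rightarrow> cfunctional \<Rightarrow> cfunctional" where
  "Fw_adj a b p w \<phi> = (\<lambda>f. if f \<in> lpab a b p then \<phi> (Fw a b w f) else 0)"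

definition adj_hypercyclic :: "(nat \<Rightarrow> complex) \<Rightarrow> (nat \<Rightarrow> complex) \<Rightarrow> real \<Rightarrow> (nat \<Rightarrow> complex) \<Rightarrow> bool" where
  "adj_hypercyclic a b p w \<longleftrightarrow> (\<exists>\<phi>\<in>dual a b p. \<forall>\<psi>\<in>dual a b p. \<forall>e>0. \<exists>n.
      dual_norm a b p (\<lambda>f. (Fw_adj a b p w ^^ n) \<phi> f - \<psi> f) < e)"

end

theory Submission
  imports Defs "HOL-Analysis.FPS_Convergence"
begin

locale HC =
  fixes a b w :: "nat \<Rightarrow> complex" and p :: real
  assumes p1: "1 < p" and anz: "\<And>n. a n \<noteq> 0" and bnz: "\<And>n. b n \<noteq> 0"
    and Lfin: "limsup (\<lambda>n. ereal ((cmod (a n) + cmod (b n)) powr (1 / real n))) < \<infinity>"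
    and wnz: "\<And>n. w n \<noteq> 0"
    and wbdd: "bdd_above (range (\<lambda>n. cmod (w n * a n / a (Suc n))))"
    and blim: "limsup (\<lambda>n. ereal (cmod (b n / a (Suc n)))) < 1"
begin

abbreviation D where "D \<equiv> Rdisc a b"

definition kap where "kap n = b n / a (Suc n)"
definition v where "v n = w n * a n / a (Suc n)"

lemma L_nonneg: "0 \<le> limsup (\<lambda>n. ereal ((cmod (a n) + cmod (b n)) powr (1 / real n)))"
  by (intro le_Limsup) auto

lemma obtain_l: obtains l where "l \<ge> 0"
  "limsup (\<lambda>n. ereal ((cmod (a n) + cmod (b n)) powr (1 / real n))) = ereal l"
proof -
  let ?L = "limsup (\<lambda>n. ereal ((cmod (a n) + cmod (b n)) powr (1 / real n)))"
  have "?L \<noteq> \<infinity>" "?L \<noteq> -\<infinity>" using Lfin L_nonneg by auto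
  then obtain l where "?L = ereal l" by (cases ?L) auto
  with L_nonneg show ?thesis using that by auto
qed

definition lL where "lL = real_of_ereal (limsup (\<lambda>n. ereal ((cmod (a n) + cmod (b n)) powr (1 / real n))))"

lemma lL: "lL \<ge> 0" "limsup (\<lambda>n. ereal ((cmod (a n) + cmod (b n)) powr (1 / real n))) = ereal lL"
proof -
  obtain l where "l \<ge> 0" "limsup (\<lambda>n. ereal ((cmod (a n) + cmod (b n)) powr (1 / real n))) = ereal l"
    using obtain_l by blast
  then show "lL \<ge> 0" "limsup (\<lambda>n. ereal ((cmod (a n) + cmod (b n)) powr (1 / real n))) = ereal lL"
    by (auto simp: lL_def)
qed

lemma D_eq: "D = {z. cmod z * lL < 1}"
  unfolding Rdisc_def lL(2) by auto

lemma zero_in_D: "0 \<in> D" by (simp add: D_eq)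

definition rho0 where "rho0 = (if lL = 0 then 1 else 1 / lL)"

lemma rho0: "rho0 > 0" "ball 0 rho0 \<subseteq> D"
proof -
  show "rho0 > 0" using lL(1) by (auto simp: rho0_def)
  show "ball 0 rho0 \<subseteq> D"
  proof
    fix z :: complex assume "z \<in> ball 0 rho0"
    then have z: "cmod z < rho0" by auto
    show "z \<in> D"
    proof (cases "lL = 0")
      case True then show ?thesis by (simp add: D_eq)
    next
      case False
      then have "lL > 0" using lL(1) by auto
      with z have "cmod z < 1/lL" using False by (auto simp: rho0_def)
      with \<open>lL > 0\<close> show ?thesis by (simp add: D_eq less_divide_eq)
    qed
  qed
qed

lemma summable_ab:
  assumes z: "z \<in> D"
  shows "summable (\<lambda>n. (cmod (a n) + cmod (b n)) * cmod z ^ n)"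
proof (rule root_test_convergence')
  let ?f = "\<lambda>n. (cmod (a n) + cmod (b n)) * cmod z ^ n"
  have ev: "eventually (\<lambda>n. ereal (root n (norm (?f n))) =
      ereal (cmod z) * ereal ((cmod (a n) + cmod (b n)) powr (1 / real n))) sequentially"
    using eventually_gt_at_top[of 0]
  proof eventually_elim
    case (elim n)
    have pos: "cmod (a n) + cmod (b n) \<ge> 0" by simp
    have "root n (norm (?f n)) = root n (cmod (a n) + cmod (b n)) * root n (cmod z ^ n)"
      by (simp add: real_root_mult abs_mult)
    also have "root n (cmod z ^ n) = cmod z" using elim by (simp add: real_root_pos2)
    also have "root n (cmod (a n) + cmod (b n)) = (cmod (a n) + cmod (b n)) powr (1 / real n)"
      using elim pos by (simp add: root_powr_inverse)
    finally show ?case by (simp add: mult.commute)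
  qed
  have "limsup (\<lambda>n. ereal (root n (norm (?f n)))) =
        limsup (\<lambda>n. ereal (cmod z) * ereal ((cmod (a n) + cmod (b n)) powr (1 / real n)))"
    by (rule Limsup_eq[OF ev])
  also have "\<dots> = ereal (cmod z) * ereal lL"
    by (subst limsup_ereal_mult_left) (auto simp: lL(2))
  also have "\<dots> < 1" using z by (simp add: D_eq)
  finally show "limsup (\<lambda>n. ereal (root n (norm (?f n)))) < 1" .
qed

lemma summable_a: "z \<in> D \<Longrightarrow> summable (\<lambda>n. cmod (a n) * cmod z ^ n)"
  by (rule summable_comparison_test'[OF summable_ab, of z 0]) (auto simp: mult_right_mono)

lemma summable_b: "z \<in> D \<Longrightarrow> summable (\<lambda>n. cmod (b n) * cmod z ^ n)"
  by (rule summable_comparison_test'[OF summable_ab, of z 0]) (auto simp: mult_right_mono)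

end


lemma powr_neg_ge1: "(s::real) powr (1 - p) \<ge> 1" if "0 < s" "s < 1" "p \<ge> 1"
  using that by (smt (verit) powr01_less_one)

lemma conv_ineq:
  fixes u y s p :: real
  assumes "u \<ge> 0" "y \<ge> 0" "0 < s" "s < 1" "p \<ge> 1"
  shows "(u + y) powr p \<le> (1 - s) powr (1 - p) * u powr p + s powr (1 - p) * y powr p"
proof -
  have c1: "(1 - s) powr (1 - p) \<ge> 1" using assms by (intro powr_neg_ge1) auto
  have c2: "s powr (1 - p) \<ge> 1" using assms by (intro powr_neg_ge1) auto
  consider "u = 0" | "y = 0" | "u > 0" "y > 0" using assms by linarith
  then show ?thesis
  proof cases
    case 1
    then show ?thesis using c2 assms by (simp add: mult_le_cancel_right1) 
  next
    case 2
    then show ?thesis using c1 assms by (simp add: mult_le_cancel_right1)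
  next
    case 3
    have "(u + y) powr p = ((1 - s) *\<^sub>R (u / (1 - s)) + s *\<^sub>R (y / s)) powr p"
      using assms by simp
    also have "\<dots> \<le> (1 - s) * (u / (1 - s)) powr p + s * (y / s) powr p"
      using 3 assms by (intro convex_onD[OF powr_convex]) auto
    also have "(1 - s) * (u / (1 - s)) powr p = (1 - s) powr (1 - p) * u powr p"
      using assms by (simp add: powr_divide powr_diff)
    also have "s * (y / s) powr p = s powr (1 - p) * y powr p"
      using assms by (simp add: powr_divide powr_diff)
    finally show ?thesis .
  qed
qed

context HC begin

definition mu :: "(nat \<Rightarrow> complex) \<Rightarrow> nat \<Rightarrow> complex" where
  "mu lam n = lam n * a n + (case n of 0 \<Rightarrow> 0 | Suc m \<Rightarrow> lam m * b m)"

definition Fb :: "nat \<Rightarrow> cfun" where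
  "Fb n = (\<lambda>z. if z \<in> D then fab a b n z else 0)"

definition lp :: "real \<Rightarrow> (nat \<Rightarrow> complex) \<Rightarrow> bool" where
  "lp r x \<longleftrightarrow> summable (\<lambda>n. cmod (x n) powr r)"

definition Np :: "real \<Rightarrow> (nat \<Rightarrow> complex) \<Rightarrow> real" where
  "Np r x = (\<Sum>n. cmod (x n) powr r)"

lemma Np_nonneg: "lp r x \<Longrightarrow> Np r x \<ge> 0"
  unfolding Np_def lp_def by (auto intro: suminf_nonneg)

lemma lp_term_le: "lp r x \<Longrightarrow> cmod (x n) powr r \<le> Np r x"
  unfolding lp_def Np_def
  using sum_le_suminf[of "\<lambda>n. cmod (x n) powr r" "{n}"] by auto

lemma lp_bound: assumes "lp r x" "r > 0" shows "cmod (x n) \<le> Np r x powr (1/r)"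
proof -
  have "cmod (x n) = (cmod (x n) powr r) powr (1/r)" using assms by (simp add: powr_powr)
  also have "\<dots> \<le> Np r x powr (1/r)"
    using lp_term_le[OF assms(1)] assms by (intro powr_mono2) auto
  finally show ?thesis .
qed

lemma series_mu:
  assumes B: "\<And>n. cmod (lam n) \<le> B" and z: "z \<in> D"
  shows "(\<lambda>n. lam n * fab a b n z) sums (\<Sum>n. mu lam n * z ^ n)"
    and "summable (\<lambda>n. mu lam n * z ^ n)"
proof -
  define A where "A n = lam n * a n * z ^ n" for n
  define Bt where "Bt n = lam n * b n * z ^ Suc n" for n
  define Bt' where "Bt' n = (case n of 0 \<Rightarrow> 0 | Suc m \<Rightarrow> Bt m)" for n
  have B0: "B \<ge> 0" using B[of 0] by (meson norm_ge_zero order.trans)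
  have sA: "summable A"
  proof (rule summable_comparison_test'[of "\<lambda>n. B * (cmod (a n) * cmod z ^ n)" 0])
    show "summable (\<lambda>n. B * (cmod (a n) * cmod z ^ n))" using summable_a[OF z] by (rule summable_mult)
    fix n have "norm (A n) = cmod (lam n) * (cmod (a n) * cmod z ^ n)"
      unfolding A_def by (simp add: norm_mult norm_power mult_ac)
    also have "\<dots> \<le> B * (cmod (a n) * cmod z ^ n)" by (rule mult_right_mono[OF B]) simp
    finally show "norm (A n) \<le> B * (cmod (a n) * cmod z ^ n)" .
  qed
  have sB: "summable Bt"
  proof (rule summable_comparison_test'[of "\<lambda>n. (B * cmod z) * (cmod (b n) * cmod z ^ n)" 0])
    show "summable (\<lambda>n. (B * cmod z) * (cmod (b n) * cmod z ^ n))" using summable_b[OF z] by (rule summable_mult)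
    fix n have "norm (Bt n) = cmod (lam n) * (cmod (b n) * cmod z ^ n * cmod z)"
      unfolding Bt_def by (simp add: norm_mult norm_power mult_ac)
    also have "\<dots> \<le> B * (cmod (b n) * cmod z ^ n * cmod z)" by (rule mult_right_mono[OF B]) simp
    finally show "norm (Bt n) \<le> (B * cmod z) * (cmod (b n) * cmod z ^ n)" by (simp add: mult_ac)
  qed
  have sB': "Bt' sums suminf Bt"
  proof -
    have "(\<lambda>n. Bt' (Suc n)) sums suminf Bt" using sB by (simp add: Bt'_def summable_sums)
    then show ?thesis by (subst (asm) sums_Suc_iff) (simp add: Bt'_def)
  qed
  have eq1: "(\<lambda>n. lam n * fab a b n z) = (\<lambda>n. A n + Bt n)"
    by (auto simp: fab_def A_def Bt_def algebra_simps)
  have eq2: "(\<lambda>n. mu lam n * z ^ n) = (\<lambda>n. A n + Bt' n)"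
    by (auto simp: mu_def A_def Bt'_def Bt_def algebra_simps split: nat.split)
  have s1: "(\<lambda>n. lam n * fab a b n z) sums (suminf A + suminf Bt)"
    unfolding eq1 using sA sB by (intro sums_add) (auto simp: summable_sums)
  have s2: "(\<lambda>n. mu lam n * z ^ n) sums (suminf A + suminf Bt)"
    unfolding eq2 using sA sB' by (intro sums_add) (auto simp: summable_sums)
  show "summable (\<lambda>n. mu lam n * z ^ n)" using s2 by (rule sums_summable)
  show "(\<lambda>n. lam n * fab a b n z) sums (\<Sum>n. mu lam n * z ^ n)"
    using s1 s2 by (simp add: sums_unique[OF s2, symmetric])
qed

lemma taylor_from_series:
  assumes "\<rho> > 0" "\<And>z. z \<in> ball 0 \<rho> \<Longrightarrow> (\<lambda>n. c n * z ^ n) sums f z"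
  shows "taylor_coeff f n = c n"
proof -
  define F where "F = Abs_fps c"
  have rad: "fps_conv_radius F \<ge> \<rho>"
    unfolding fps_conv_radius_def F_def
  proof (rule conv_radius_geI_ex')
    fix r :: real assume r: "0 < r" "ereal r < ereal \<rho>"
    have "of_real r \<in> ball (0::complex) \<rho>" using r by auto
    from assms(2)[OF this] show "summable (\<lambda>n. fps_nth (Abs_fps c) n * of_real r ^ n)"
      by (auto dest: sums_summable)
  qed
  have "eventually (\<lambda>z. z \<in> ball 0 \<rho>) (nhds (0::complex))"
    using assms(1) by (intro eventually_nhds_in_open) auto
  then have ev: "eventually (\<lambda>z. eval_fps F z = f z) (nhds 0)"
    by eventually_elim (auto simp: eval_fps_def F_def sums_unique[OF assms(2), symmetric])
  have "f has_fps_expansion F"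
    unfolding has_fps_expansion_def using rad assms(1) ev
    by (auto intro: less_le_trans[of 0 "ereal \<rho>"])
  from fps_nth_fps_expansion[OF this, of n] show ?thesis
    by (simp add: taylor_coeff_def F_def)
qed


lemma rep_lp: "represents a b p lam f \<Longrightarrow> lp p lam"
  by (simp add: represents_def lp_def)

lemma rep_bounded: "represents a b p lam f \<Longrightarrow> cmod (lam n) \<le> Np p lam powr (1/p)"
  using lp_bound[OF rep_lp] p1 by auto

lemma rep_series: assumes "represents a b p lam f" "z \<in> D"
  shows "(\<lambda>n. mu lam n * z ^ n) sums f z"
proof -
  have s1: "(\<lambda>n. lam n * fab a b n z) sums f z" using assms by (auto simp: represents_def)
  have s2: "(\<lambda>n. lam n * fab a b n z) sums (\<Sum>n. mu lam n * z ^ n)"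
    "summable (\<lambda>n. mu lam n * z ^ n)"
    using series_mu[OF rep_bounded[OF assms(1)] assms(2)] by auto
  from sums_unique2[OF s1 s2(1)] s2(2) show ?thesis by (simp add: summable_sums)
qed

lemma rep_taylor: "represents a b p lam f \<Longrightarrow> taylor_coeff f n = mu lam n"
  by (rule taylor_from_series[OF rho0(1)]) (use rep_series rho0(2) in blast)

lemma mu_inj: assumes "\<And>n. mu x n = mu y n" shows "x = y"
proof
  fix n show "x n = y n"
  proof (induction n)
    case 0 then show ?case using assms[of 0] anz[of 0] by (simp add: mu_def)
  next
    case (Suc n) then show ?case using assms[of "Suc n"] anz[of "Suc n"] by (simp add: mu_def)
  qed
qed

lemma coefs_eq: assumes "represents a b p lam f" shows "coefs a b p f = lam"
  unfolding coefs_def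
proof (rule the_equality)
  show "represents a b p lam f" by (rule assms)
  fix lam' assume "represents a b p lam' f"
  then show "lam' = lam" using rep_taylor assms by (intro mu_inj) metis
qed

lemma lpab_norm_eq: "represents a b p lam f \<Longrightarrow> lpab_norm a b p f = Np p lam powr (1/p)"
  by (simp add: lpab_norm_def coefs_eq Np_def)

lemma lpab_rep: "f \<in> lpab a b p \<Longrightarrow> represents a b p (coefs a b p f) f"
  unfolding lpab_def using coefs_eq by auto

lemma sum_powr_le: "cmod (x + y) powr p \<le> 2 powr (p - 1) * (cmod x powr p + cmod y powr p)"
proof -
  have "cmod (x + y) powr p \<le> (cmod x + cmod y) powr p"
    using p1 by (intro powr_mono2) (auto intro: norm_triangle_ineq)
  also have "\<dots> \<le> (1 - 1/2) powr (1 - p) * cmod x powr p + (1/2) powr (1 - p) * cmod y powr p"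
    using p1 by (intro conv_ineq) auto
  also have "(1 - 1/2::real) powr (1 - p) = 2 powr (p - 1)"
    by (simp add: powr_divide powr_diff)
  also have "(1/2::real) powr (1 - p) = 2 powr (p - 1)"
    by (simp add: powr_divide powr_diff)
  finally show ?thesis by (simp add: algebra_simps)
qed

lemma lp_add: assumes "lp p x" "lp p y" shows "lp p (\<lambda>n. x n + y n)"
  unfolding lp_def
proof (rule summable_comparison_test'[of "\<lambda>n. 2 powr (p - 1) * (cmod (x n) powr p + cmod (y n) powr p)" 0])
  show "summable (\<lambda>n. 2 powr (p - 1) * (cmod (x n) powr p + cmod (y n) powr p))"
    using assms unfolding lp_def by (intro summable_mult summable_add)
  fix n show "norm (cmod (x n + y n) powr p) \<le> 2 powr (p - 1) * (cmod (x n) powr p + cmod (y n) powr p)"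
    using sum_powr_le by simp
qed

lemma Np_scale: "lp r x \<Longrightarrow> r > 0 \<Longrightarrow> Np r (\<lambda>n. c * x n) = cmod c powr r * Np r x"
  unfolding Np_def lp_def by (simp add: norm_mult powr_mult suminf_mult)

lemma lp_scale: "lp r x \<Longrightarrow> lp r (\<lambda>n. c * x n)"
  unfolding lp_def by (simp add: norm_mult powr_mult summable_mult)

lemma rep_add: assumes "represents a b p x f" "represents a b p y g"
  shows "represents a b p (\<lambda>n. x n + y n) (\<lambda>z. f z + g z)"
  using assms lp_add[OF rep_lp rep_lp, OF assms] unfolding represents_def lp_def
  by (auto simp: distrib_right intro: sums_add)

lemma rep_scale: assumes "represents a b p x f"
  shows "represents a b p (\<lambda>n. c * x n) (\<lambda>z. c * f z)"
  using assms lp_scale[OF rep_lp, OF assms] unfolding represents_def lp_def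
  by (auto simp: mult.assoc intro: sums_mult)

lemma rep_zero: "represents a b p (\<lambda>n. 0) (\<lambda>z. 0)"
  unfolding represents_def by auto

lemma rep_Fb: "represents a b p (\<lambda>k. if k = n then 1 else 0) (Fb n)"
  unfolding represents_def Fb_def
proof (intro conjI ballI allI impI)
  show "summable (\<lambda>k. cmod (if k = n then 1 else 0::complex) powr p)"
    by (rule summable_finite[of "{n}"]) auto
  fix z assume "z \<in> D"
  have "(\<lambda>k. (if k = n then 1 else 0) * fab a b k z) = (\<lambda>k. if k = n then fab a b n z else 0)"
    by auto
  then show "(\<lambda>k. (if k = n then 1 else 0) * fab a b k z) sums (if z \<in> D then fab a b n z else 0)"
    using \<open>z \<in> D\<close> sums_single[of n "\<lambda>_. fab a b n z"] by simp
qed auto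


lemma kap_ev_ex: "\<exists>r. 0 < r \<and> r < 1 \<and> (\<exists>N0. \<forall>n\<ge>N0. cmod (kap n) \<le> r)"
proof -
  have l0: "0 \<le> limsup (\<lambda>n. ereal (cmod (b n / a (Suc n))))" by (intro le_Limsup) auto
  obtain y :: ereal where y: "limsup (\<lambda>n. ereal (cmod (b n / a (Suc n)))) < y" "y < 1"
    using blim dense by blast
  then have "eventually (\<lambda>n. ereal (cmod (b n / a (Suc n))) < y) sequentially"
    by (intro Limsup_lessD) 
  then obtain N0 where N0: "\<forall>n\<ge>N0. ereal (cmod (b n / a (Suc n))) < y"
    by (auto simp: eventually_sequentially)
  have ypos: "y > 0" using l0 y by auto
  then obtain r where r: "y = ereal r" using y(2) by (cases y) auto
  show ?thesis
    using N0 r y(2) ypos by (intro exI[of _ r] conjI exI[of _ N0]) (auto simp: kap_def less_imp_le)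
qed

definition rr where "rr = (SOME r. 0 < r \<and> r < 1 \<and> (\<exists>N0. \<forall>n\<ge>N0. cmod (kap n) \<le> r))"

lemma rr: "0 < rr" "rr < 1" "\<exists>N0. \<forall>n\<ge>N0. cmod (kap n) \<le> rr"
  using someI_ex[OF kap_ev_ex] unfolding rr_def[symmetric] by auto

definition N0 where "N0 = (SOME N0. \<forall>n\<ge>N0. cmod (kap n) \<le> rr)"

lemma N0: "n \<ge> N0 \<Longrightarrow> cmod (kap n) \<le> rr"
  using someI_ex[OF rr(3)] unfolding N0_def[symmetric] by auto

definition Kb where "Kb = 1 + (\<Sum>n<N0. cmod (kap n))"

lemma Kb: "cmod (kap n) \<le> Kb" "Kb \<ge> 1"
proof -
  show "Kb \<ge> 1" unfolding Kb_def by (simp add: sum_nonneg)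
  show "cmod (kap n) \<le> Kb"
  proof (cases "n < N0")
    case True
    then have "cmod (kap n) \<le> (\<Sum>n<N0. cmod (kap n))"
      by (intro member_le_sum) auto
    then show ?thesis unfolding Kb_def by simp
  next
    case False then show ?thesis using N0[of n] rr(2) \<open>Kb \<ge> 1\<close> by auto
  qed
qed

definition Mb where "Mb = max 1 (SUP n. cmod (v n))"

lemma Mb: "cmod (v n) \<le> Mb" "Mb \<ge> 1"
proof -
  show "Mb \<ge> 1" by (simp add: Mb_def)
  have "cmod (v n) \<le> (SUP n. cmod (v n))"
    using wbdd unfolding v_def by (intro cSUP_upper) auto
  then show "cmod (v n) \<le> Mb" by (simp add: Mb_def)
qed

lemma nz_kap: "kap n \<noteq> 0" and nz_v: "v n \<noteq> 0"
  using anz bnz wnz by (auto simp: kap_def v_def)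

primrec lrec :: "(nat \<Rightarrow> complex) \<Rightarrow> nat \<Rightarrow> complex" where
  "lrec \<rho> 0 = \<rho> 0"
| "lrec \<rho> (Suc n) = \<rho> (Suc n) - kap n * lrec \<rho> n"

lemma mu_lrec: "mu (lrec \<rho>) n = a n * \<rho> n"
  using anz by (cases n) (auto simp: mu_def kap_def field_simps)

definition Bw where "Bw = 2 powr (p - 1) * Kb powr p"
definition Ar where "Ar = max (2 powr (p - 1)) ((1 - rr) powr (1 - p))"
definition sr where "sr = max rr (1/2)"
definition th where "th n = (2 * Bw) ^ (N0 - n)"
definition Crec where "Crec = Ar * (2 * Bw) ^ N0 / (1 - sr)"

lemma Bw_ge1: "Bw \<ge> 1"
proof -
  have "2 powr (p - 1) \<ge> 1" using p1 by (intro ge_one_powr_ge_zero) auto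
  moreover have "Kb powr p \<ge> 1" using Kb(2) p1 by (intro ge_one_powr_ge_zero) auto
  ultimately have "1 * 1 \<le> 2 powr (p - 1) * Kb powr p" by (intro mult_mono) auto
  then show ?thesis unfolding Bw_def by simp
qed

lemma th_ge1: "th n \<ge> 1" unfolding th_def by (rule one_le_power) (use Bw_ge1 in linarith)
lemma th_le: "th n \<le> (2 * Bw) ^ N0" unfolding th_def by (rule power_increasing) (use Bw_ge1 in auto)

lemma lrec_step:
  "th (Suc n) * cmod (lrec \<rho> (Suc n)) powr p \<le>
     Ar * th (Suc n) * cmod (\<rho> (Suc n)) powr p + sr * (th n * cmod (lrec \<rho> n) powr p)"
proof -
  let ?l = "cmod (lrec \<rho> n)" and ?r = "cmod (\<rho> (Suc n))"
  have tri: "cmod (lrec \<rho> (Suc n)) \<le> ?r + cmod (kap n) * ?l"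
    by (simp add: norm_mult[symmetric] norm_triangle_ineq4)
  have Ar1: "Ar \<ge> 2 powr (p - 1)" "Ar \<ge> (1 - rr) powr (1 - p)" by (auto simp: Ar_def)
  show ?thesis
  proof (cases "n \<ge> N0")
    case True
    have th1: "th (Suc n) = 1" "th n = 1" using True by (auto simp: th_def)
    have "cmod (kap n) * ?l \<le> rr * ?l" by (rule mult_right_mono[OF N0[OF True]]) simp
    then have "cmod (lrec \<rho> (Suc n)) powr p \<le> (?r + rr * ?l) powr p"
      using tri p1 by (intro powr_mono2) auto
    also have "\<dots> \<le> (1 - rr) powr (1 - p) * ?r powr p + rr powr (1 - p) * (rr * ?l) powr p"
      using rr p1 by (intro conv_ineq) auto
    also have "rr powr (1 - p) * (rr * ?l) powr p = rr * ?l powr p"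
      using rr by (simp add: powr_mult mult_ac powr_diff powr_minus_divide)
    also have "(1 - rr) powr (1 - p) * ?r powr p \<le> Ar * ?r powr p"
      using Ar1 by (intro mult_right_mono) auto
    also have "rr * ?l powr p \<le> sr * ?l powr p" by (intro mult_right_mono) (auto simp: sr_def)
    finally show ?thesis using th1 by simp
  next
    case False
    have e: "N0 - n = Suc (N0 - Suc n)" using False by arith
    have thn: "th n = 2 * Bw * th (Suc n)" unfolding th_def e by (simp only: power_Suc)
    have "cmod (kap n) * ?l \<le> Kb * ?l" by (rule mult_right_mono[OF Kb(1)]) simp
    then have "cmod (lrec \<rho> (Suc n)) powr p \<le> (?r + Kb * ?l) powr p"
      using tri p1 by (intro powr_mono2) auto
    also have "\<dots> \<le> (1 - 1/2) powr (1 - p) * ?r powr p + (1/2) powr (1 - p) * (Kb * ?l) powr p"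
      using p1 Kb(2) by (intro conv_ineq) auto
    also have "(1/2::real) powr (1 - p) = 2 powr (p - 1)" by (simp add: powr_divide powr_diff)
    also have "(1 - 1/2::real) powr (1 - p) = 2 powr (p - 1)" by (simp add: powr_divide powr_diff)
    also have "2 powr (p - 1) * (Kb * ?l) powr p = Bw * ?l powr p"
      using Kb(2) by (simp add: powr_mult Bw_def)
    finally have "cmod (lrec \<rho> (Suc n)) powr p \<le> 2 powr (p - 1) * ?r powr p + Bw * ?l powr p" .
    then have "th (Suc n) * cmod (lrec \<rho> (Suc n)) powr p \<le>
        th (Suc n) * (2 powr (p - 1) * ?r powr p + Bw * ?l powr p)"
      using th_ge1[of "Suc n"] by (intro mult_left_mono) auto
    also have "\<dots> = 2 powr (p - 1) * th (Suc n) * ?r powr p + (1/2) * (th n * ?l powr p)"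
      by (simp add: thn algebra_simps)
    also have "\<dots> \<le> Ar * th (Suc n) * ?r powr p + sr * (th n * ?l powr p)"
      using Ar1 th_ge1[of n] th_ge1[of "Suc n"] by (intro add_mono mult_right_mono) (auto simp: sr_def)
    finally show ?thesis .
  qed
qed


lemma sr: "0 < sr" "sr < 1" using rr by (auto simp: sr_def)
lemma Ar_ge1: "Ar \<ge> 1"
proof -
  have "2 powr (p - 1) \<ge> 1" using p1 by (intro ge_one_powr_ge_zero) auto
  then show ?thesis by (simp add: Ar_def)
qed

lemma Crec_pos: "Crec > 0"
  unfolding Crec_def using Ar_ge1 Bw_ge1 sr by (intro divide_pos_pos mult_pos_pos) auto

lemma psum_le_Np: "lp r x \<Longrightarrow> (\<Sum>n<m. cmod (x n) powr r) \<le> Np r x"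
  unfolding lp_def Np_def by (intro sum_le_suminf) auto

lemma lrec_bound: assumes "lp p \<rho>"
  shows "lp p (lrec \<rho>)" "Np p (lrec \<rho>) \<le> Crec * Np p \<rho>"
proof -
  define y where "y n = th n * cmod (lrec \<rho> n) powr p" for n
  define g where "g n = Ar * th n * cmod (\<rho> n) powr p" for n
  define T where "T = Ar * (2 * Bw) ^ N0 * Np p \<rho>"
  have T0: "T \<ge> 0" unfolding T_def using Ar_ge1 Bw_ge1 Np_nonneg[OF assms] by simp
  have gT: "(\<Sum>n<m. g n) \<le> T" for m
  proof -
    have "(\<Sum>n<m. g n) \<le> (\<Sum>n<m. Ar * (2 * Bw) ^ N0 * cmod (\<rho> n) powr p)"
      unfolding g_def using th_le Ar_ge1 by (intro sum_mono mult_right_mono mult_left_mono) auto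
    also have "\<dots> = Ar * (2 * Bw) ^ N0 * (\<Sum>n<m. cmod (\<rho> n) powr p)" by (simp add: sum_distrib_left)
    also have "\<dots> \<le> T" unfolding T_def using psum_le_Np[OF assms] Ar_ge1 Bw_ge1
      by (intro mult_left_mono) auto
    finally show ?thesis .
  qed
  have y0: "y 0 \<le> g 0" unfolding y_def g_def using Ar_ge1 th_ge1[of 0]
    by (simp add: mult_right_mono)
  have ys: "y (Suc n) \<le> g (Suc n) + sr * y n" for n
    unfolding y_def g_def using lrec_step[where \<rho>=\<rho> and n=n] by simp
  have yb: "(\<Sum>n<m. y n) \<le> T / (1 - sr)" for m
  proof (induction m)
    case 0 then show ?case using T0 sr by simp
  next
    case (Suc m)
    have "(\<Sum>n<Suc m. y n) = y 0 + (\<Sum>n<m. y (Suc n))" by (rule sum.lessThan_Suc_shift)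
    also have "\<dots> \<le> g 0 + (\<Sum>n<m. g (Suc n) + sr * y n)" using y0 ys by (intro add_mono sum_mono) auto
    also have "\<dots> = (\<Sum>n<Suc m. g n) + sr * (\<Sum>n<m. y n)"
      by (simp only: sum.distrib sum_distrib_left sum.lessThan_Suc_shift add.assoc)
    also have "\<dots> \<le> T + sr * (T / (1 - sr))" using gT[of "Suc m"] Suc sr by (intro add_mono mult_left_mono) auto
    also have "\<dots> = T / (1 - sr)" using sr by (simp add: field_simps)
    finally show ?case .
  qed
  have lb: "(\<Sum>n<m. cmod (lrec \<rho> n) powr p) \<le> T / (1 - sr)" for m
  proof -
    have "(\<Sum>n<m. cmod (lrec \<rho> n) powr p) \<le> (\<Sum>n<m. y n)"
      unfolding y_def using th_ge1 by (intro sum_mono) (simp add: mult_le_cancel_right1)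
    then show ?thesis using yb[of m] by linarith
  qed
  show "lp p (lrec \<rho>)" unfolding lp_def by (rule summableI_nonneg_bounded[OF _ lb]) simp
  then have "Np p (lrec \<rho>) \<le> T / (1 - sr)" unfolding Np_def lp_def
    by (intro suminf_le_const lb)
  also have "T / (1 - sr) = Crec * Np p \<rho>" unfolding T_def Crec_def by simp
  finally show "Np p (lrec \<rho>) \<le> Crec * Np p \<rho>" .
qed

end


context HC begin

lemma synth:
  assumes s: "\<And>z. z \<in> D \<Longrightarrow> (\<lambda>n. c n * z ^ n) sums h z"
    and z: "\<And>z. z \<notin> D \<Longrightarrow> h z = 0" and l: "lp p (\<lambda>n. c n / a n)"
  shows "represents a b p (lrec (\<lambda>n. c n / a n)) h"
proof -
  let ?l = "lrec (\<lambda>n. c n / a n)"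
  have lp: "lp p ?l" by (rule lrec_bound(1)[OF l])
  have mu: "mu ?l n = c n" for n using anz by (simp add: mu_lrec)
  have "(\<lambda>n. ?l n * fab a b n z) sums h z" if "z \<in> D" for z
  proof -
    have "(\<lambda>n. ?l n * fab a b n z) sums (\<Sum>n. mu ?l n * z ^ n)"
      using series_mu(1)[OF lp_bound[OF lp] that] p1 by auto
    also have "(\<Sum>n. mu ?l n * z ^ n) = h z" using sums_unique[OF s[OF that]] by (simp add: mu)
    finally show ?thesis .
  qed
  then show ?thesis using lp z unfolding represents_def lp_def by auto
qed

definition shR :: "(nat \<Rightarrow> complex) \<Rightarrow> nat \<Rightarrow> complex" where
  "shR x n = (case n of 0 \<Rightarrow> 0 | Suc k \<Rightarrow> x k)"

lemma shR_lp: assumes "lp r x" "r > 0" shows "lp r (shR x)" "Np r (shR x) = Np r x"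
proof -
  have "(\<lambda>n. cmod (shR x (Suc n)) powr r) sums Np r x"
    using assms unfolding lp_def Np_def shR_def by (simp add: summable_sums)
  then have "(\<lambda>n. cmod (shR x n) powr r) sums Np r x"
    using assms by (subst (asm) sums_Suc_iff) (simp add: shR_def)
  then show "lp r (shR x)" "Np r (shR x) = Np r x"
    unfolding lp_def Np_def by (auto simp: sums_iff)
qed

lemma lp_mult_bdd: assumes "lp r x" "r > 0" "\<And>n. cmod (m n) \<le> C"
  shows "lp r (\<lambda>n. m n * x n)" "Np r (\<lambda>n. m n * x n) \<le> C powr r * Np r x"
proof -
  have C0: "C \<ge> 0" using assms(3)[of 0] by (meson norm_ge_zero order.trans)
  have le: "cmod (m n * x n) powr r \<le> C powr r * cmod (x n) powr r" for n
  proof -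
    have "cmod (m n * x n) powr r \<le> (C * cmod (x n)) powr r"
      using assms(2,3) by (intro powr_mono2) (auto simp: norm_mult mult_right_mono)
    also have "\<dots> = C powr r * cmod (x n) powr r" using C0 by (simp add: powr_mult)
    finally show ?thesis .
  qed
  show l: "lp r (\<lambda>n. m n * x n)" unfolding lp_def
    by (rule summable_comparison_test'[of "\<lambda>n. C powr r * cmod (x n) powr r" 0])
       (use assms(1) le in \<open>auto simp: lp_def intro: summable_mult\<close>)
  show "Np r (\<lambda>n. m n * x n) \<le> C powr r * Np r x"
    unfolding Np_def using l assms(1) le unfolding lp_def
    by (subst suminf_mult[symmetric]) (auto intro!: suminf_le summable_mult)
qed

lemma Np_add_le: assumes "lp p x" "lp p y"
  shows "Np p (\<lambda>n. x n + y n) \<le> 2 powr (p - 1) * (Np p x + Np p y)"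
proof -
  have "Np p (\<lambda>n. x n + y n) \<le> (\<Sum>n. 2 powr (p - 1) * (cmod (x n) powr p + cmod (y n) powr p))"
    unfolding Np_def using lp_add[OF assms] assms sum_powr_le unfolding lp_def
    by (intro suminf_le) (auto intro!: summable_mult summable_add)
  also have "\<dots> = 2 powr (p - 1) * (Np p x + Np p y)"
    using assms unfolding lp_def Np_def by (simp add: suminf_mult suminf_add summable_add)
  finally show ?thesis .
qed

definition Gm :: "nat \<Rightarrow> cfun" where
  "Gm m = (\<lambda>z. if z \<in> D then z ^ m else 0)"

definition gco :: "nat \<Rightarrow> nat \<Rightarrow> complex" where
  "gco m = lrec (\<lambda>n. (if n = m then 1 else 0) / a n)"

lemma rep_Gm: "represents a b p (gco m) (Gm m)"
  unfolding gco_def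
proof (rule synth)
  fix z assume "z \<in> D"
  have "(\<lambda>n. (if n = m then 1 else 0) * z ^ n) = (\<lambda>n. if n = m then z ^ m else 0)" by auto
  then show "(\<lambda>n. (if n = m then 1 else 0) * z ^ n) sums Gm m z"
    using \<open>z \<in> D\<close> sums_single[of m "\<lambda>_. z ^ m"] by (simp add: Gm_def)
next
  show "lp p (\<lambda>n. (if n = m then 1 else 0) / a n)" unfolding lp_def
    by (rule summable_finite[of "{m}"]) auto
qed (auto simp: Gm_def)

lemma Gm_norm: "cmod (a m) powr p * Np p (gco m) \<le> Crec"
proof -
  let ?d = "\<lambda>n. (if n = m then 1 else 0) / a n"
  have l: "lp p ?d" unfolding lp_def by (rule summable_finite[of "{m}"]) auto
  have "Np p ?d = (\<Sum>n. if n = m then cmod (1 / a m) powr p else 0)"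
    unfolding Np_def by (intro suminf_cong) (auto simp: p1)
  also have "\<dots> = cmod (1 / a m) powr p" using sums_single[of m "\<lambda>_. cmod (1 / a m) powr p"] by (simp add: sums_iff)
  finally have e: "Np p ?d = cmod (1 / a m) powr p" .
  have "Np p (gco m) \<le> Crec * cmod (1 / a m) powr p"
    using lrec_bound(2)[OF l] unfolding gco_def e .
  then have "cmod (a m) powr p * Np p (gco m) \<le> cmod (a m) powr p * (Crec * cmod (1 / a m) powr p)"
    by (intro mult_left_mono) auto
  also have "\<dots> = Crec"
    using anz[of m] by (simp add: norm_divide powr_divide powr_mult[symmetric])
  finally show ?thesis .
qed


definition FwR :: "(nat \<Rightarrow> complex) \<Rightarrow> nat \<Rightarrow> complex" where
  "FwR x = shR (\<lambda>n. v n * (x n + shR (\<lambda>k. kap k * x k) n))"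

lemma FwR_Suc: "FwR x (Suc n) = w n * mu x n / a (Suc n)"
  using anz by (cases n) (auto simp: FwR_def shR_def mu_def v_def kap_def field_simps)

lemma FwR_0: "FwR x 0 = 0" by (simp add: FwR_def shR_def)

definition CF where "CF = Crec * Mb powr p * 2 powr (p - 1) * (1 + Kb powr p)"

lemma FwR_lp: assumes "lp p x" shows "lp p (FwR x)" "Np p (FwR x) \<le> (CF / Crec) * Np p x"
proof -
  have pp: "p > 0" using p1 by simp
  have l1: "lp p (\<lambda>k. kap k * x k)" "Np p (\<lambda>k. kap k * x k) \<le> Kb powr p * Np p x"
    using lp_mult_bdd[OF assms pp Kb(1)] by auto
  have l2: "lp p (shR (\<lambda>k. kap k * x k))" "Np p (shR (\<lambda>k. kap k * x k)) \<le> Kb powr p * Np p x"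
    using shR_lp[OF l1(1) pp] l1(2) by auto
  have l3: "lp p (\<lambda>n. x n + shR (\<lambda>k. kap k * x k) n)"
    using lp_add[OF assms l2(1)] .
  have n3: "Np p (\<lambda>n. x n + shR (\<lambda>k. kap k * x k) n) \<le> 2 powr (p - 1) * (1 + Kb powr p) * Np p x"
  proof -
    have "Np p (\<lambda>n. x n + shR (\<lambda>k. kap k * x k) n) \<le> 2 powr (p - 1) * (Np p x + Np p (shR (\<lambda>k. kap k * x k)))"
      by (rule Np_add_le[OF assms l2(1)])
    also have "\<dots> \<le> 2 powr (p - 1) * (Np p x + Kb powr p * Np p x)"
      using l2(2) by (intro mult_left_mono add_left_mono) auto
    finally show ?thesis by (simp add: algebra_simps)
  qed
  have l4: "lp p (\<lambda>n. v n * (x n + shR (\<lambda>k. kap k * x k) n))"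
    "Np p (\<lambda>n. v n * (x n + shR (\<lambda>k. kap k * x k) n)) \<le> Mb powr p * Np p (\<lambda>n. x n + shR (\<lambda>k. kap k * x k) n)"
    using lp_mult_bdd[OF l3 pp Mb(1)] by auto
  show "lp p (FwR x)" unfolding FwR_def using shR_lp(1)[OF l4(1) pp] .
  have "Np p (FwR x) \<le> Mb powr p * (2 powr (p - 1) * (1 + Kb powr p) * Np p x)"
    unfolding FwR_def shR_lp(2)[OF l4(1) pp] using l4(2) n3
    by (meson order.trans mult_left_mono powr_ge_zero)
  also have "\<dots> = (CF / Crec) * Np p x" using Crec_pos by (simp add: CF_def)
  finally show "Np p (FwR x) \<le> (CF / Crec) * Np p x" .
qed

lemma FwR_bound: assumes "\<And>n. cmod (x n) \<le> B" shows "cmod (FwR x n) \<le> Mb * (1 + Kb) * B"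
proof -
  have B0: "B \<ge> 0" using assms[of 0] by (meson norm_ge_zero order.trans)
  have sb: "cmod (shR (\<lambda>k. kap k * x k) n) \<le> Kb * B" for n
    using Kb(2) B0 by (cases n) (auto simp: shR_def norm_mult intro: mult_mono Kb(1) assms)
  have "cmod (v m * (x m + shR (\<lambda>k. kap k * x k) m)) \<le> Mb * (B + Kb * B)" for m
    unfolding norm_mult using Mb assms[of m] sb[of m] 
    by (intro mult_mono) (auto intro: order.trans[OF norm_triangle_ineq] add_mono)
  then show ?thesis using Mb(2) B0 Kb(2) by (cases n) (auto simp: FwR_def shR_def algebra_simps)
qed

lemma Fw_summ: assumes "represents a b p x g" "z \<in> D"
  shows "summable (\<lambda>n. mu x n * w n * z ^ Suc n)"
proof -
  define B where "B = Np p x powr (1/p)"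
  have xb: "cmod (x n) \<le> B" for n using rep_bounded[OF assms(1)] by (simp add: B_def)
  have e: "mu x n * w n = a (Suc n) * FwR x (Suc n)" for n using anz by (simp add: FwR_Suc)
  have sa: "summable (\<lambda>n. cmod (a (Suc n)) * cmod z ^ Suc n)"
    using summable_a[OF assms(2)] by (subst summable_Suc_iff)
  show ?thesis
  proof (rule summable_comparison_test'[of "\<lambda>n. (Mb * (1 + Kb) * B) * (cmod (a (Suc n)) * cmod z ^ Suc n)" 0])
    show "summable (\<lambda>n. (Mb * (1 + Kb) * B) * (cmod (a (Suc n)) * cmod z ^ Suc n))"
      using sa by (rule summable_mult)
    fix n
    have "norm (mu x n * w n * z ^ Suc n) = cmod (mu x n * w n) * cmod (z ^ Suc n)"
      by (simp only: norm_mult)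
    also have "\<dots> = cmod (FwR x (Suc n)) * (cmod (a (Suc n)) * cmod z ^ Suc n)"
      unfolding e by (simp add: norm_mult norm_power mult_ac)
    also have "\<dots> \<le> (Mb * (1 + Kb) * B) * (cmod (a (Suc n)) * cmod z ^ Suc n)"
      by (intro mult_right_mono FwR_bound xb) auto
    finally show "norm (mu x n * w n * z ^ Suc n) \<le> (Mb * (1 + Kb) * B) * (cmod (a (Suc n)) * cmod z ^ Suc n)" .
  qed
qed

lemma Fw_eq: assumes "represents a b p x g" "z \<in> D"
  shows "Fw a b w g z = (\<Sum>n. mu x n * w n * z ^ Suc n)"
  using assms by (simp add: Fw_def rep_taylor)

lemma rep_Fw: assumes "represents a b p x g"
  shows "represents a b p (lrec (FwR x)) (Fw a b w g)"
proof -
  define c where "c n = (case n of 0 \<Rightarrow> 0 | Suc k \<Rightarrow> w k * mu x k)" for n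
  have ca: "(\<lambda>n. c n / a n) = FwR x"
    using anz by (auto simp: c_def FwR_0 FwR_Suc split: nat.split)
  have "represents a b p (lrec (\<lambda>n. c n / a n)) (Fw a b w g)"
  proof (rule synth)
    fix z assume z: "z \<in> D"
    have "(\<lambda>n. mu x n * w n * z ^ Suc n) sums Fw a b w g z"
      using Fw_summ[OF assms z] Fw_eq[OF assms z] by (simp add: summable_sums)
    moreover have "(\<lambda>n. c (Suc n) * z ^ Suc n) = (\<lambda>n. mu x n * w n * z ^ Suc n)"
      by (auto simp: c_def)
    ultimately have "(\<lambda>n. c (Suc n) * z ^ Suc n) sums Fw a b w g z" by simp
    then show "(\<lambda>n. c n * z ^ n) sums Fw a b w g z"
      by (subst (asm) sums_Suc_iff) (simp add: c_def)
  next
    show "lp p (\<lambda>n. c n / a n)" unfolding ca using FwR_lp(1)[OF rep_lp[OF assms]] .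
  qed (simp add: Fw_def)
  then show ?thesis unfolding ca .
qed

lemma Fw_in: "g \<in> lpab a b p \<Longrightarrow> Fw a b w g \<in> lpab a b p"
  using rep_Fw[OF lpab_rep] unfolding lpab_def by blast

lemma Fw_coefs: "represents a b p x g \<Longrightarrow> coefs a b p (Fw a b w g) = lrec (FwR x)"
  by (rule coefs_eq[OF rep_Fw])

lemma Fw_Np: assumes "represents a b p x g"
  shows "Np p (coefs a b p (Fw a b w g)) \<le> CF * Np p x"
proof -
  have "Np p (lrec (FwR x)) \<le> Crec * Np p (FwR x)" using lrec_bound(2)[OF FwR_lp(1)[OF rep_lp[OF assms]]] .
  also have "\<dots> \<le> Crec * ((CF / Crec) * Np p x)"
    using FwR_lp(2)[OF rep_lp[OF assms]] Crec_pos by (intro mult_left_mono) auto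
  also have "\<dots> = CF * Np p x" using Crec_pos by simp
  finally show ?thesis using Fw_coefs[OF assms] by simp
qed

lemma Fw_taylor_Suc: assumes "represents a b p x g"
  shows "taylor_coeff (Fw a b w g) (Suc n) = w n * taylor_coeff g n"
  using rep_taylor[OF rep_Fw[OF assms]] rep_taylor[OF assms] anz
  by (simp add: mu_lrec FwR_Suc)

lemma Fw_taylor_0: assumes "represents a b p x g"
  shows "taylor_coeff (Fw a b w g) 0 = 0"
  using rep_taylor[OF rep_Fw[OF assms]] by (simp add: mu_lrec FwR_0)


lemma lpab_add: "f \<in> lpab a b p \<Longrightarrow> g \<in> lpab a b p \<Longrightarrow> (\<lambda>z. f z + g z) \<in> lpab a b p"
  using rep_add[OF lpab_rep lpab_rep] unfolding lpab_def by blast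

lemma lpab_scale: "f \<in> lpab a b p \<Longrightarrow> (\<lambda>z. c * f z) \<in> lpab a b p"
  using rep_scale[OF lpab_rep] unfolding lpab_def by blast

lemma lpab_zero: "(\<lambda>z. 0) \<in> lpab a b p"
  using rep_zero unfolding lpab_def by blast

lemma lpab_diff: "f \<in> lpab a b p \<Longrightarrow> g \<in> lpab a b p \<Longrightarrow> (\<lambda>z. f z - g z) \<in> lpab a b p"
  using lpab_add[OF _ lpab_scale[of g "-1"]] by simp

lemma coefs_add: "f \<in> lpab a b p \<Longrightarrow> g \<in> lpab a b p \<Longrightarrow>
  coefs a b p (\<lambda>z. f z + g z) = (\<lambda>n. coefs a b p f n + coefs a b p g n)"
  by (rule coefs_eq[OF rep_add[OF lpab_rep lpab_rep]])

lemma coefs_scale: "f \<in> lpab a b p \<Longrightarrow> coefs a b p (\<lambda>z. c * f z) = (\<lambda>n. c * coefs a b p f n)"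
  by (rule coefs_eq[OF rep_scale[OF lpab_rep]])

lemma lpab_norm_nonneg: "f \<in> lpab a b p \<Longrightarrow> lpab_norm a b p f \<ge> 0"
  by (simp add: lpab_norm_def)

lemma lpab_norm_scale: assumes "f \<in> lpab a b p"
  shows "lpab_norm a b p (\<lambda>z. c * f z) = cmod c * lpab_norm a b p f"
proof -
  have l: "lp p (coefs a b p f)" using rep_lp[OF lpab_rep[OF assms]] .
  have "lpab_norm a b p (\<lambda>z. c * f z) = (cmod c powr p * Np p (coefs a b p f)) powr (1/p)"
    unfolding lpab_norm_def coefs_scale[OF assms] using Np_scale[OF l, of c] p1 by (simp add: Np_def)
  also have "\<dots> = cmod c * Np p (coefs a b p f) powr (1/p)"
    using p1 Np_nonneg[OF l] by (simp add: powr_mult powr_powr)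
  finally show ?thesis by (simp add: lpab_norm_def Np_def)
qed

lemma Np_zero_imp: assumes "lp r x" "Np r x = 0" "r > 0" shows "x n = 0"
proof -
  have "cmod (x n) \<le> Np r x powr (1/r)" by (rule lp_bound[OF assms(1,3)])
  then show ?thesis using assms by simp
qed

lemma lpab_norm_zero: assumes "f \<in> lpab a b p" "lpab_norm a b p f = 0" shows "f = (\<lambda>z. 0)"
proof -
  have r: "represents a b p (coefs a b p f) f" by (rule lpab_rep[OF assms(1)])
  have l: "lp p (coefs a b p f)" by (rule rep_lp[OF r])
  have "Np p (coefs a b p f) = 0" using assms(2) Np_nonneg[OF l] p1
    by (simp add: lpab_norm_def Np_def[symmetric])
  then have z: "coefs a b p f n = 0" for n using Np_zero_imp[OF l] p1 by auto
  show ?thesis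
  proof
    fix z show "f z = 0"
    proof (cases "z \<in> D")
      case True
      then have "(\<lambda>n. coefs a b p f n * fab a b n z) sums f z" using r by (auto simp: represents_def)
      then show ?thesis using z by (simp add: sums_0 sums_unique2[of "\<lambda>_. 0"])
    next
      case False then show ?thesis using r by (auto simp: represents_def)
    qed
  qed
qed

lemma lpab_norm_Fw: assumes "f \<in> lpab a b p"
  shows "lpab_norm a b p (Fw a b w f) \<le> CF powr (1/p) * lpab_norm a b p f"
proof -
  have r: "represents a b p (coefs a b p f) f" by (rule lpab_rep[OF assms])
  have l: "lp p (coefs a b p f)" by (rule rep_lp[OF r])
  have "lpab_norm a b p (Fw a b w f) = Np p (coefs a b p (Fw a b w f)) powr (1/p)"
    by (simp add: lpab_norm_def Np_def)
  also have "\<dots> \<le> (CF * Np p (coefs a b p f)) powr (1/p)"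
    using Fw_Np[OF r] rep_lp[OF lpab_rep[OF Fw_in[OF assms]]] p1
    by (intro powr_mono2) (auto intro: Np_nonneg)
  also have "\<dots> = CF powr (1/p) * lpab_norm a b p f"
    using Np_nonneg[OF l] by (simp add: powr_mult lpab_norm_def Np_def)
  finally show ?thesis .
qed

lemma taylor_add: "f \<in> lpab a b p \<Longrightarrow> g \<in> lpab a b p \<Longrightarrow>
    taylor_coeff (\<lambda>z. f z + g z) n = taylor_coeff f n + taylor_coeff g n"
  using rep_taylor[OF rep_add[OF lpab_rep lpab_rep]] rep_taylor[OF lpab_rep]
  by (simp add: mu_def algebra_simps split: nat.split)

lemma taylor_scale: "f \<in> lpab a b p \<Longrightarrow> taylor_coeff (\<lambda>z. c * f z) n = c * taylor_coeff f n"
  using rep_taylor[OF rep_scale[OF lpab_rep]] rep_taylor[OF lpab_rep]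
  by (simp add: mu_def algebra_simps split: nat.split)

lemma Fw_add: assumes "f \<in> lpab a b p" "g \<in> lpab a b p"
  shows "Fw a b w (\<lambda>z. f z + g z) = (\<lambda>z. Fw a b w f z + Fw a b w g z)"
proof
  fix z show "Fw a b w (\<lambda>z. f z + g z) z = Fw a b w f z + Fw a b w g z"
  proof (cases "z \<in> D")
    case True
    have s1: "summable (\<lambda>n. taylor_coeff f n * w n * z ^ Suc n)"
      using Fw_summ[OF lpab_rep[OF assms(1)] True] rep_taylor[OF lpab_rep[OF assms(1)]] by simp
    have s2: "summable (\<lambda>n. taylor_coeff g n * w n * z ^ Suc n)"
      using Fw_summ[OF lpab_rep[OF assms(2)] True] rep_taylor[OF lpab_rep[OF assms(2)]] by simp
    show ?thesis using True suminf_add[OF s1 s2]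
      by (simp add: Fw_def taylor_add[OF assms] algebra_simps)
  qed (simp add: Fw_def)
qed

lemma Fw_scale: assumes "f \<in> lpab a b p"
  shows "Fw a b w (\<lambda>z. c * f z) = (\<lambda>z. c * Fw a b w f z)"
proof
  fix z show "Fw a b w (\<lambda>z. c * f z) z = c * Fw a b w f z"
  proof (cases "z \<in> D")
    case True
    have s1: "summable (\<lambda>n. taylor_coeff f n * w n * z ^ Suc n)"
      using Fw_summ[OF lpab_rep[OF assms(1)] True] rep_taylor[OF lpab_rep[OF assms(1)]] by simp
    show ?thesis using True suminf_mult[OF s1, of c]
      by (simp add: Fw_def taylor_scale[OF assms] algebra_simps)
  qed (simp add: Fw_def)
qed

end


context HC begin

definition bl :: "cfunctional \<Rightarrow> bool" where
  "bl \<phi> \<longleftrightarrow> (\<forall>f\<in>lpab a b p. \<forall>g\<in>lpab a b p. \<phi> (\<lambda>z. f z + g z) = \<phi> f + \<phi> g) \<and>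
     (\<forall>c. \<forall>f\<in>lpab a b p. \<phi> (\<lambda>z. c * f z) = c * \<phi> f) \<and>
     (\<exists>C. \<forall>f\<in>lpab a b p. cmod (\<phi> f) \<le> C * lpab_norm a b p f)"

lemma dual_bl: "\<phi> \<in> dual a b p \<Longrightarrow> bl \<phi>"
  by (simp add: dual_def bl_def)

lemma dual_iff: "\<phi> \<in> dual a b p \<longleftrightarrow> bl \<phi> \<and> (\<forall>f. f \<notin> lpab a b p \<longrightarrow> \<phi> f = 0)"
  by (simp add: dual_def bl_def)

lemma blI:
  assumes "\<And>f g. f \<in> lpab a b p \<Longrightarrow> g \<in> lpab a b p \<Longrightarrow> \<phi> (\<lambda>z. f z + g z) = \<phi> f + \<phi> g"
    "\<And>c f. f \<in> lpab a b p \<Longrightarrow> \<phi> (\<lambda>z. c * f z) = c * \<phi> f"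
    "\<And>f. f \<in> lpab a b p \<Longrightarrow> cmod (\<phi> f) \<le> C * lpab_norm a b p f"
  shows "bl \<phi>"
  using assms unfolding bl_def by blast

lemma bl_add: "bl \<phi> \<Longrightarrow> f \<in> lpab a b p \<Longrightarrow> g \<in> lpab a b p \<Longrightarrow> \<phi> (\<lambda>z. f z + g z) = \<phi> f + \<phi> g"
  by (simp add: bl_def)
lemma bl_scale: "bl \<phi> \<Longrightarrow> f \<in> lpab a b p \<Longrightarrow> \<phi> (\<lambda>z. c * f z) = c * \<phi> f"
  by (simp add: bl_def)

lemma bl_bound: assumes "bl \<phi>" obtains C where "C \<ge> 0" "\<And>f. f \<in> lpab a b p \<Longrightarrow> cmod (\<phi> f) \<le> C * lpab_norm a b p f"
proof -
  obtain C where C: "\<And>f. f \<in> lpab a b p \<Longrightarrow> cmod (\<phi> f) \<le> C * lpab_norm a b p f"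
    using assms unfolding bl_def by blast
  have "cmod (\<phi> f) \<le> max C 0 * lpab_norm a b p f" if "f \<in> lpab a b p" for f
    using C[OF that] lpab_norm_nonneg[OF that] by (smt (verit) mult_right_mono)
  then show ?thesis using that[of "max C 0"] by auto
qed

lemma bl_zero: "bl \<phi> \<Longrightarrow> \<phi> (\<lambda>z. 0) = 0"
  using bl_scale[OF _ lpab_zero, of \<phi> 0] by simp

lemma bl_diff: "bl \<phi> \<Longrightarrow> f \<in> lpab a b p \<Longrightarrow> g \<in> lpab a b p \<Longrightarrow> \<phi> (\<lambda>z. f z - g z) = \<phi> f - \<phi> g"
  using bl_add[OF _ _ lpab_scale[of g "-1"], of \<phi> f] bl_scale[of \<phi> g "-1"] by simp

definition dset where "dset \<phi> = {cmod (\<phi> f) | f. f \<in> lpab a b p \<and> lpab_norm a b p f \<le> 1}"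

lemma dual_norm_dset: "dual_norm a b p \<phi> = Sup (dset \<phi>)"
  by (simp add: dual_norm_def dset_def)

lemma dset_ne: "dset \<phi> \<noteq> {}"
  unfolding dset_def using lpab_zero lpab_norm_eq[OF rep_zero] p1 by (auto simp: Np_def)

lemma dset_bdd: assumes "bl \<phi>" shows "bdd_above (dset \<phi>)"
proof -
  obtain C where C: "C \<ge> 0" "\<And>f. f \<in> lpab a b p \<Longrightarrow> cmod (\<phi> f) \<le> C * lpab_norm a b p f"
    using bl_bound[OF assms] by blast
  have "x \<le> C" if "x \<in> dset \<phi>" for x
    using that C unfolding dset_def by (auto intro: order.trans mult_left_le)
  then show ?thesis by (auto simp: bdd_above_def)
qed

lemma dual_norm_le: assumes "C \<ge> 0" "\<And>f. f \<in> lpab a b p \<Longrightarrow> cmod (\<phi> f) \<le> C * lpab_norm a b p f"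
  shows "dual_norm a b p \<phi> \<le> C"
  unfolding dual_norm_dset
proof (rule cSup_least[OF dset_ne])
  fix x assume "x \<in> dset \<phi>"
  then show "x \<le> C" using assms unfolding dset_def by (auto intro: order.trans mult_left_le)
qed

lemma dual_norm_nonneg: assumes "bl \<phi>" shows "dual_norm a b p \<phi> \<ge> 0"
proof -
  have "cmod (\<phi> (\<lambda>z. 0)) \<in> dset \<phi>"
    unfolding dset_def using lpab_zero lpab_norm_eq[OF rep_zero] p1 by (auto simp: Np_def)
  then have "cmod (\<phi> (\<lambda>z. 0)) \<le> dual_norm a b p \<phi>"
    unfolding dual_norm_dset using dset_bdd[OF assms] by (intro cSup_upper)
  then show ?thesis by (meson norm_ge_zero order.trans)
qed

lemma dual_le: assumes "bl \<phi>" "f \<in> lpab a b p"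
  shows "cmod (\<phi> f) \<le> dual_norm a b p \<phi> * lpab_norm a b p f"
proof (cases "lpab_norm a b p f = 0")
  case True
  then have "f = (\<lambda>z. 0)" using lpab_norm_zero assms by blast
  then have "\<phi> f = 0" using bl_zero[OF assms(1)] by simp
  then show ?thesis using True by simp
next
  case False
  define N where "N = lpab_norm a b p f"
  have N: "N > 0" using False lpab_norm_nonneg[OF assms(2)] by (simp add: N_def)
  define g where "g = (\<lambda>z. complex_of_real (1 / N) * f z)"
  have g: "g \<in> lpab a b p" unfolding g_def using lpab_scale[OF assms(2)] .
  have gn: "lpab_norm a b p g = 1" unfolding g_def lpab_norm_scale[OF assms(2)] using N by (simp add: N_def norm_divide)
  have "cmod (\<phi> g) \<in> dset \<phi>" unfolding dset_def using g gn by auto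
  then have "cmod (\<phi> g) \<le> dual_norm a b p \<phi>"
    unfolding dual_norm_dset using dset_bdd[OF assms(1)] by (intro cSup_upper)
  moreover have "cmod (\<phi> g) = cmod (\<phi> f) / N"
    unfolding g_def bl_scale[OF assms] using N by (simp add: norm_mult norm_divide)
  ultimately show ?thesis using N by (simp add: N_def divide_le_eq)
qed

lemma dual_norm_cong: "(\<And>f. f \<in> lpab a b p \<Longrightarrow> \<phi> f = \<psi> f) \<Longrightarrow> dual_norm a b p \<phi> = dual_norm a b p \<psi>"
  unfolding dual_norm_dset dset_def by (metis (no_types, lifting))

lemma bl_lin: assumes "bl \<phi>" "bl \<psi>" shows "bl (\<lambda>f. \<phi> f + c * \<psi> f)"
proof -
  obtain C1 where C1: "C1 \<ge> 0" "\<And>f. f \<in> lpab a b p \<Longrightarrow> cmod (\<phi> f) \<le> C1 * lpab_norm a b p f"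
    using bl_bound[OF assms(1)] by blast
  obtain C2 where C2: "C2 \<ge> 0" "\<And>f. f \<in> lpab a b p \<Longrightarrow> cmod (\<psi> f) \<le> C2 * lpab_norm a b p f"
    using bl_bound[OF assms(2)] by blast
  show ?thesis
  proof (rule blI[where C = "C1 + cmod c * C2"])
    fix f assume f: "f \<in> lpab a b p"
    have "cmod (\<phi> f + c * \<psi> f) \<le> cmod (\<phi> f) + cmod c * cmod (\<psi> f)"
      by (metis norm_mult norm_triangle_ineq)
    also have "\<dots> \<le> C1 * lpab_norm a b p f + cmod c * (C2 * lpab_norm a b p f)"
      using C1(2)[OF f] C2(2)[OF f] by (intro add_mono mult_left_mono) auto
    finally show "cmod (\<phi> f + c * \<psi> f) \<le> (C1 + cmod c * C2) * lpab_norm a b p f"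
      by (simp add: algebra_simps)
  qed (use assms in \<open>auto simp: bl_add bl_scale algebra_simps\<close>)
qed

lemma bl_minus: "bl \<phi> \<Longrightarrow> bl \<psi> \<Longrightarrow> bl (\<lambda>f. \<phi> f - \<psi> f)"
  using bl_lin[of \<phi> \<psi> "-1"] by simp

lemma dual_norm_tri: assumes "bl \<phi>" "bl \<psi>" "bl \<xi>"
  shows "dual_norm a b p (\<lambda>f. \<phi> f - \<xi> f) \<le> dual_norm a b p (\<lambda>f. \<phi> f - \<psi> f) + dual_norm a b p (\<lambda>f. \<psi> f - \<xi> f)"
proof (rule dual_norm_le)
  show "0 \<le> dual_norm a b p (\<lambda>f. \<phi> f - \<psi> f) + dual_norm a b p (\<lambda>f. \<psi> f - \<xi> f)"
    using dual_norm_nonneg bl_minus assms by (simp add: add_nonneg_nonneg)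
  fix f assume f: "f \<in> lpab a b p"
  have "cmod (\<phi> f - \<xi> f) \<le> cmod (\<phi> f - \<psi> f) + cmod (\<psi> f - \<xi> f)"
    by (metis diff_add_cancel norm_triangle_ineq add_diff_eq)
  also have "\<dots> \<le> dual_norm a b p (\<lambda>f. \<phi> f - \<psi> f) * lpab_norm a b p f + dual_norm a b p (\<lambda>f. \<psi> f - \<xi> f) * lpab_norm a b p f"
    using dual_le[OF bl_minus[OF assms(1,2)] f] dual_le[OF bl_minus[OF assms(2,3)] f] by (intro add_mono) auto
  finally show "cmod (\<phi> f - \<xi> f) \<le> (dual_norm a b p (\<lambda>f. \<phi> f - \<psi> f) + dual_norm a b p (\<lambda>f. \<psi> f - \<xi> f)) * lpab_norm a b p f"
    by (simp add: algebra_simps)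
qed

lemma Fw_adj_bl: assumes "bl \<phi>" shows "bl (Fw_adj a b p w \<phi>)"
proof -
  obtain C where C: "C \<ge> 0" "\<And>f. f \<in> lpab a b p \<Longrightarrow> cmod (\<phi> f) \<le> C * lpab_norm a b p f"
    using bl_bound[OF assms] by blast
  show ?thesis
  proof (rule blI[where C = "C * CF powr (1/p)"])
    fix f g assume f: "f \<in> lpab a b p" and g: "g \<in> lpab a b p"
    show "Fw_adj a b p w \<phi> (\<lambda>z. f z + g z) = Fw_adj a b p w \<phi> f + Fw_adj a b p w \<phi> g"
      using f g lpab_add[OF f g] by (simp add: Fw_adj_def Fw_add bl_add[OF assms] Fw_in)
  next
    fix c f assume f: "f \<in> lpab a b p"
    show "Fw_adj a b p w \<phi> (\<lambda>z. c * f z) = c * Fw_adj a b p w \<phi> f"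
      using f lpab_scale[OF f] by (simp add: Fw_adj_def Fw_scale bl_scale[OF assms] Fw_in)
  next
    fix f assume f: "f \<in> lpab a b p"
    have "cmod (Fw_adj a b p w \<phi> f) = cmod (\<phi> (Fw a b w f))" using f by (simp add: Fw_adj_def)
    also have "\<dots> \<le> C * lpab_norm a b p (Fw a b w f)" using C(2)[OF Fw_in[OF f]] .
    also have "\<dots> \<le> C * (CF powr (1/p) * lpab_norm a b p f)"
      using lpab_norm_Fw[OF f] C(1) by (intro mult_left_mono) auto
    finally show "cmod (Fw_adj a b p w \<phi> f) \<le> C * CF powr (1/p) * lpab_norm a b p f" by (simp add: mult_ac)
  qed
qed

lemma Fw_adj_dual: "\<phi> \<in> dual a b p \<Longrightarrow> Fw_adj a b p w \<phi> \<in> dual a b p"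
  using Fw_adj_bl[OF dual_bl] by (auto simp: dual_iff Fw_adj_def)

lemma Fw_adj_pow_dual: "\<phi> \<in> dual a b p \<Longrightarrow> (Fw_adj a b p w ^^ n) \<phi> \<in> dual a b p"
  by (induction n) (auto intro: Fw_adj_dual)

lemma Fw_pow_in: "f \<in> lpab a b p \<Longrightarrow> (Fw a b w ^^ n) f \<in> lpab a b p"
  by (induction n) (auto intro: Fw_in)

lemma Fw_adj_pow_apply: "f \<in> lpab a b p \<Longrightarrow> (Fw_adj a b p w ^^ n) \<phi> f = \<phi> ((Fw a b w ^^ n) f)"
proof (induction n arbitrary: f)
  case 0 then show ?case by simp
next
  case (Suc n)
  have "(Fw_adj a b p w ^^ Suc n) \<phi> f = (Fw_adj a b p w ^^ n) \<phi> (Fw a b w f)"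
    using Suc.prems by (simp add: Fw_adj_def)
  also have "\<dots> = \<phi> ((Fw a b w ^^ n) (Fw a b w f))" using Suc.IH[OF Fw_in[OF Suc.prems]] .
  finally show ?case by (simp add: funpow_Suc_right del: funpow.simps)
qed

end


context HC begin

definition q where "q = p / (p - 1)"

lemma q: "q > 1" "1 / p + 1 / q = 1" "(q - 1) * p = q" "q > 0"
  using p1 by (auto simp: q_def field_simps)

lemma holder:
  assumes x: "lp p x" and y: "lp q y"
  shows "summable (\<lambda>n. cmod (x n * y n))"
    "(\<Sum>n. cmod (x n * y n)) \<le> Np p x powr (1/p) * Np q y powr (1/q)"
proof -
  have pq: "1 < p" "1 < q" "1/p + 1/q = 1" using p1 q by auto
  have yg: "cmod (x n * y n) \<le> cmod (x n) powr p / p + cmod (y n) powr q / q" for n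
    using Youngs_inequality[OF pq, of "cmod (x n)" "cmod (y n)"] by (simp add: norm_mult)
  show s: "summable (\<lambda>n. cmod (x n * y n))"
  proof (rule summable_comparison_test'[of "\<lambda>n. cmod (x n) powr p / p + cmod (y n) powr q / q" 0])
    show "summable (\<lambda>n. cmod (x n) powr p / p + cmod (y n) powr q / q)"
      using x y by (auto simp: lp_def intro!: summable_add summable_divide)
  qed (use yg in auto)
  define A where "A = Np p x powr (1/p)"
  define B where "B = Np q y powr (1/q)"
  have A0: "A \<ge> 0" "B \<ge> 0" by (auto simp: A_def B_def)
  show "(\<Sum>n. cmod (x n * y n)) \<le> A * B"
  proof (cases "A = 0 \<or> B = 0")
    case True
    then have "\<forall>n. x n * y n = 0"
    proof
      assume "A = 0"
      then have "Np p x = 0" using Np_nonneg[OF x] by (simp add: A_def)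
      then show ?thesis using Np_zero_imp[OF x] p1 by auto
    next
      assume "B = 0"
      then have "Np q y = 0" using Np_nonneg[OF y] by (simp add: B_def)
      then show ?thesis using Np_zero_imp[OF y] q by auto
    qed
    then have "(\<lambda>n. cmod (x n * y n)) = (\<lambda>n. 0)" by auto
    then show ?thesis using A0 by simp
  next
    case False
    then have Ap: "A > 0" "B > 0" using A0 by auto
    have Ap': "A powr p = Np p x" "B powr q = Np q y"
      using Np_nonneg[OF x] Np_nonneg[OF y] p1 q by (auto simp: A_def B_def powr_powr)
    have yg2: "cmod (x n * y n) / (A * B) \<le> (cmod (x n) powr p / Np p x) / p + (cmod (y n) powr q / Np q y) / q" for n
    proof -
      have "cmod (x n * y n) / (A * B) = (cmod (x n) / A) * (cmod (y n) / B)" by (simp add: norm_mult)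
      also have "\<dots> \<le> (cmod (x n) / A) powr p / p + (cmod (y n) / B) powr q / q"
        using Youngs_inequality[OF pq, of "cmod (x n) / A" "cmod (y n) / B"] Ap by simp
      also have "\<dots> = (cmod (x n) powr p / Np p x) / p + (cmod (y n) powr q / Np q y) / q"
        using Ap by (simp add: powr_divide Ap')
      finally show ?thesis .
    qed
    have "(\<Sum>n. cmod (x n * y n)) / (A * B) = (\<Sum>n. cmod (x n * y n) / (A * B))"
      using s by (simp add: suminf_divide)
    also have "\<dots> \<le> (\<Sum>n. (cmod (x n) powr p / Np p x) / p + (cmod (y n) powr q / Np q y) / q)"
      using s x y yg2 unfolding lp_def
      by (intro suminf_le) (auto intro!: summable_add summable_divide)
    also have "\<dots> = (Np p x / Np p x) / p + (Np q y / Np q y) / q"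
      using x y unfolding lp_def Np_def
      by (subst suminf_add[symmetric]) (auto simp: suminf_divide intro!: summable_divide)
    also have "\<dots> = 1" using Ap Ap' pq by auto
    finally show ?thesis using Ap by (simp add: divide_le_eq)
  qed
qed

lemma holder_abs: assumes "lp p x" "lp q y"
  shows "cmod (\<Sum>n. x n * y n) \<le> Np p x powr (1/p) * Np q y powr (1/q)"
  using summable_norm[OF holder(1)[OF assms]] holder(2)[OF assms] by linarith

lemma holder_summable: assumes "lp p x" "lp q y" shows "summable (\<lambda>n. x n * y n)"
  using holder(1)[OF assms] by (rule summable_norm_cancel)

lemma rep_fin: "represents a b p (\<lambda>k. if k < N then x k else 0) (\<lambda>z. \<Sum>k<N. x k * Fb k z)"
proof (induction N)
  case 0 then show ?case using rep_zero by simp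
next
  case (Suc N)
  have "represents a b p (\<lambda>k. (if k < N then x k else 0) + x N * (if k = N then 1 else 0))
          (\<lambda>z. (\<Sum>k<N. x k * Fb k z) + x N * Fb N z)"
    by (rule rep_add[OF Suc rep_scale[OF rep_Fb]])
  moreover have "(\<lambda>k. (if k < N then x k else 0) + x N * (if k = N then 1 else 0)) = (\<lambda>k. if k < Suc N then x k else 0)"
    by (rule ext) (simp add: less_Suc_eq)
  ultimately show ?case by simp
qed

lemma Fb_in: "Fb n \<in> lpab a b p" using rep_Fb unfolding lpab_def by blast

lemma fin_in: "(\<lambda>z. \<Sum>k<N. x k * Fb k z) \<in> lpab a b p" using rep_fin unfolding lpab_def by blast

lemma bl_fin: assumes "bl \<phi>" shows "\<phi> (\<lambda>z. \<Sum>k<N. x k * Fb k z) = (\<Sum>k<N. x k * \<phi> (Fb k))"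
proof (induction N)
  case 0 then show ?case using bl_zero[OF assms] by simp
next
  case (Suc N)
  have "\<phi> (\<lambda>z. \<Sum>k<Suc N. x k * Fb k z) = \<phi> (\<lambda>z. (\<Sum>k<N. x k * Fb k z) + x N * Fb N z)" by simp
  also have "\<dots> = \<phi> (\<lambda>z. \<Sum>k<N. x k * Fb k z) + \<phi> (\<lambda>z. x N * Fb N z)"
    by (rule bl_add[OF assms fin_in lpab_scale[OF Fb_in]])
  also have "\<dots> = (\<Sum>k<Suc N. x k * \<phi> (Fb k))" using Suc bl_scale[OF assms Fb_in] by simp
  finally show ?case .
qed

definition tlz where "tlz N x = (\<lambda>k. if k < N then 0 else x k)"

lemma tlz_lp: "lp r x \<Longrightarrow> lp r (tlz N x)"
  unfolding lp_def tlz_def by (rule summable_comparison_test'[of "\<lambda>n. cmod (x n) powr r" 0]) auto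

lemma tlz_tendsto: assumes "lp r x" shows "(\<lambda>N. Np r (tlz N x)) \<longlonglongrightarrow> 0"
proof -
  let ?f = "\<lambda>n. cmod (x n) powr r"
  have s: "summable ?f" using assms by (simp add: lp_def)
  have e: "Np r (tlz N x) = suminf ?f - (\<Sum>n<N. ?f n)" for N
  proof -
    have "(\<lambda>n. ?f n - (if n \<in> {..<N} then ?f n else 0)) sums (suminf ?f - (\<Sum>n\<in>{..<N}. ?f n))"
      using s by (intro sums_diff sums_If_finite_set) (auto simp: summable_sums)
    moreover have "(\<lambda>n. ?f n - (if n \<in> {..<N} then ?f n else 0)) = (\<lambda>n. cmod (tlz N x n) powr r)"
      by (auto simp: tlz_def)
    ultimately show ?thesis by (simp add: Np_def sums_iff)
  qed
  have "(\<lambda>N. suminf ?f - (\<Sum>n<N. ?f n)) \<longlonglongrightarrow> suminf ?f - suminf ?f"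
    using s by (intro tendsto_diff tendsto_const summable_LIMSEQ)
  then show ?thesis by (simp add: e)
qed

lemma rep_tlz: assumes "g \<in> lpab a b p"
  shows "represents a b p (tlz N (coefs a b p g)) (\<lambda>z. g z - (\<Sum>k<N. coefs a b p g k * Fb k z))"
proof -
  have "represents a b p (\<lambda>n. coefs a b p g n + (-1) * (if n < N then coefs a b p g n else 0))
     (\<lambda>z. g z + (-1) * (\<Sum>k<N. coefs a b p g k * Fb k z))"
    by (rule rep_add[OF lpab_rep[OF assms] rep_scale[OF rep_fin]])
  moreover have "(\<lambda>n. coefs a b p g n + (-1) * (if n < N then coefs a b p g n else 0)) = tlz N (coefs a b p g)"
    by (auto simp: tlz_def)
  ultimately show ?thesis by simp
qed


lemma Np_fin: assumes "r > 0"
  shows "lp r (\<lambda>k. if k < N then x k else 0)" "Np r (\<lambda>k. if k < N then x k else 0) = (\<Sum>k<N. cmod (x k) powr r)"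
proof -
  have e: "(\<lambda>k. cmod (if k < N then x k else 0) powr r) = (\<lambda>k. if k \<in> {..<N} then cmod (x k) powr r else 0)"
    using assms by auto
  have "(\<lambda>k. cmod (if k < N then x k else 0) powr r) sums (\<Sum>k<N. cmod (x k) powr r)"
    unfolding e by (rule sums_If_finite_set) auto
  then show "lp r (\<lambda>k. if k < N then x k else 0)" "Np r (\<lambda>k. if k < N then x k else 0) = (\<Sum>k<N. cmod (x k) powr r)"
    by (auto simp: lp_def Np_def sums_iff)
qed

definition dc :: "cfunctional \<Rightarrow> nat \<Rightarrow> complex" where "dc \<psi> n = \<psi> (Fb n)"

lemma dual_c_lq: assumes "bl \<psi>"
  shows "lp q (dc \<psi>)" "Np q (dc \<psi>) \<le> dual_norm a b p \<psi> powr q"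
proof -
  define c where "c = dc \<psi>"
  define C where "C = dual_norm a b p \<psi>"
  have C0: "C \<ge> 0" unfolding C_def by (rule dual_norm_nonneg[OF assms])
  define t where "t k = (if c k = 0 then 0 else cnj (c k) * of_real (cmod (c k) powr (q - 2)))" for k
  have tc: "t k * c k = of_real (cmod (c k) powr q)" for k
  proof (cases "c k = 0")
    case True then show ?thesis using q by (simp add: t_def)
  next
    case False
    have "t k * c k = of_real (cmod (c k) powr (q - 2)) * (c k * cnj (c k))" by (simp add: t_def False mult_ac)
    also have "c k * cnj (c k) = of_real (cmod (c k) powr 2)"
    proof -
      have "c k * cnj (c k) = of_real (cmod (c k)) ^ 2" using complex_norm_square by auto
      also have "\<dots> = of_real (cmod (c k) powr 2)" using False by (simp add: powr_numeral)
      finally show ?thesis .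
    qed
    also have "of_real (cmod (c k) powr (q - 2)) * of_real (cmod (c k) powr 2) = (of_real (cmod (c k) powr q) :: complex)"
    proof -
      have e: "cmod (c k) powr (q - 2) * cmod (c k) powr 2 = cmod (c k) powr q"
        by (subst powr_add[symmetric]) simp
      show ?thesis by (simp only: of_real_mult[symmetric] e)
    qed
    finally show ?thesis .
  qed
  have tp: "cmod (t k) powr p = cmod (c k) powr q" for k
  proof (cases "c k = 0")
    case True then show ?thesis using q p1 by (simp add: t_def)
  next
    case False
    have e1: "cmod (t k) = cmod (c k) * cmod (c k) powr (q - 2)"
      using False unfolding t_def by (simp only: if_False norm_mult complex_mod_cnj norm_of_real) simp
    have e2: "cmod (c k) powr 1 * cmod (c k) powr (q - 2) = cmod (c k) powr (q - 1)"
      by (subst powr_add[symmetric]) simp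
    have "cmod (t k) = cmod (c k) powr (q - 1)" using e1 e2 False by simp
    then show ?thesis using q(3) by (simp add: powr_powr)
  qed
  have S: "(\<Sum>k<N. cmod (c k) powr q) \<le> C powr q" for N
  proof -
    define S where "S = (\<Sum>k<N. cmod (c k) powr q)"
    have S0: "S \<ge> 0" unfolding S_def by (simp add: sum_nonneg)
    define g where "g = (\<lambda>z. \<Sum>k<N. t k * Fb k z)"
    have g: "g \<in> lpab a b p" unfolding g_def by (rule fin_in)
    have "Np p (\<lambda>k. if k < N then t k else 0) = (\<Sum>k<N. cmod (t k) powr p)"
      by (rule Np_fin(2)) (use p1 in simp)
    then have gn: "lpab_norm a b p g = S powr (1/p)"
      unfolding g_def lpab_norm_eq[OF rep_fin] by (simp add: tp S_def)
    have "\<psi> g = (\<Sum>k<N. t k * c k)" unfolding g_def bl_fin[OF assms] by (simp add: c_def dc_def)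
    also have "\<dots> = of_real S" by (simp add: tc S_def)
    finally have pg: "\<psi> g = of_real S" .
    have "S \<le> C * S powr (1/p)" using dual_le[OF assms g] pg gn S0 by (simp add: C_def)
    show "S \<le> C powr q"
    proof (cases "S = 0")
      case True then show ?thesis by simp
    next
      case False
      then have Sp: "S > 0" using S0 by simp
      have qq: "1/q = 1 - 1/p" using q(2) by linarith
      have "S powr (1/q) = S / S powr (1/p)" unfolding qq using Sp by (simp add: powr_diff)
      also have "\<dots> \<le> C" using \<open>S \<le> C * S powr (1/p)\<close> Sp by (simp add: divide_le_eq)
      finally have "S powr (1/q) \<le> C" .
      then have "(S powr (1/q)) powr q \<le> C powr q" using q by (intro powr_mono2) auto
      then show ?thesis using q Sp by (simp add: powr_powr)
    qed
  qed
  show "lp q (dc \<psi>)" unfolding lp_def c_def[symmetric]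
    by (rule summableI_nonneg_bounded[OF _ S]) simp
  then show "Np q (dc \<psi>) \<le> dual_norm a b p \<psi> powr q" unfolding lp_def Np_def c_def[symmetric] C_def[symmetric]
    by (intro suminf_le_const S)
qed

lemma dual_sums: assumes "bl \<psi>" "g \<in> lpab a b p"
  shows "(\<lambda>n. coefs a b p g n * dc \<psi> n) sums \<psi> g"
proof -
  let ?l = "coefs a b p g"
  have l: "lp p ?l" by (rule rep_lp[OF lpab_rep[OF assms(2)]])
  have ps: "(\<Sum>n<N. ?l n * dc \<psi> n) = \<psi> (\<lambda>z. \<Sum>k<N. ?l k * Fb k z)" for N
    unfolding bl_fin[OF assms(1)] by (simp add: dc_def)
  have bnd: "cmod (\<psi> g - \<psi> (\<lambda>z. \<Sum>k<N. ?l k * Fb k z)) \<le> dual_norm a b p \<psi> * Np p (tlz N ?l) powr (1/p)" for N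
  proof -
    have "\<psi> g - \<psi> (\<lambda>z. \<Sum>k<N. ?l k * Fb k z) = \<psi> (\<lambda>z. g z - (\<Sum>k<N. ?l k * Fb k z))"
      by (rule bl_diff[OF assms(1) assms(2) fin_in, symmetric])
    moreover have "cmod (\<psi> (\<lambda>z. g z - (\<Sum>k<N. ?l k * Fb k z))) \<le> dual_norm a b p \<psi> * lpab_norm a b p (\<lambda>z. g z - (\<Sum>k<N. ?l k * Fb k z))"
      by (rule dual_le[OF assms(1) lpab_diff[OF assms(2) fin_in]])
    moreover have "lpab_norm a b p (\<lambda>z. g z - (\<Sum>k<N. ?l k * Fb k z)) = Np p (tlz N ?l) powr (1/p)"
      by (rule lpab_norm_eq[OF rep_tlz[OF assms(2)]])
    ultimately show ?thesis by simp
  qed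
  have t0: "(\<lambda>N. dual_norm a b p \<psi> * Np p (tlz N ?l) powr (1/p)) \<longlonglongrightarrow> dual_norm a b p \<psi> * 0"
    using p1 tlz_lp[OF l] by (intro tendsto_mult tendsto_const tendsto_zero_powrI[OF tlz_tendsto[OF l]])
      (auto intro!: always_eventually Np_nonneg)
  have "(\<lambda>N. \<psi> g - \<psi> (\<lambda>z. \<Sum>k<N. ?l k * Fb k z)) \<longlonglongrightarrow> 0"
    by (rule Lim_null_comparison[OF _ t0[simplified]]) (use bnd in auto)
  then have "(\<lambda>N. \<psi> g - (\<psi> g - \<psi> (\<lambda>z. \<Sum>k<N. ?l k * Fb k z))) \<longlonglongrightarrow> \<psi> g - 0"
    by (intro tendsto_diff tendsto_const)
  then show ?thesis unfolding sums_def ps by simp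
qed

lemma dual_tail: assumes "bl \<psi>" "g \<in> lpab a b p"
  shows "cmod (\<psi> g - (\<Sum>n<N. coefs a b p g n * dc \<psi> n)) \<le> lpab_norm a b p g * Np q (tlz N (dc \<psi>)) powr (1/q)"
proof -
  let ?l = "coefs a b p g" and ?c = "dc \<psi>"
  have l: "lp p ?l" by (rule rep_lp[OF lpab_rep[OF assms(2)]])
  have c: "lp q (tlz N ?c)" by (rule tlz_lp[OF dual_c_lq(1)[OF assms(1)]])
  have "(\<lambda>n. ?l n * ?c n - (if n \<in> {..<N} then ?l n * ?c n else 0)) sums (\<psi> g - (\<Sum>n\<in>{..<N}. ?l n * ?c n))"
    by (intro sums_diff dual_sums[OF assms] sums_If_finite_set) auto
  moreover have "(\<lambda>n. ?l n * ?c n - (if n \<in> {..<N} then ?l n * ?c n else 0)) = (\<lambda>n. ?l n * tlz N ?c n)"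
    by (auto simp: tlz_def)
  ultimately have "\<psi> g - (\<Sum>n<N. ?l n * ?c n) = (\<Sum>n. ?l n * tlz N ?c n)" by (simp add: sums_iff)
  also have "cmod \<dots> \<le> Np p ?l powr (1/p) * Np q (tlz N ?c) powr (1/q)" by (rule holder_abs[OF l c])
  also have "Np p ?l powr (1/p) = lpab_norm a b p g" by (simp add: lpab_norm_def Np_def)
  finally show ?thesis .
qed

end


context HC begin

lemma sum_powr_le_r: assumes "r \<ge> 1"
  shows "cmod (x + y) powr r \<le> 2 powr (r - 1) * (cmod x powr r + cmod y powr r)"
proof (cases "r = 1")
  case True then show ?thesis using norm_triangle_ineq[of x y] by simp
next
  case False
  then have r: "r > 1" using assms by simp
  have "cmod (x + y) powr r \<le> (cmod x + cmod y) powr r"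
    using r by (intro powr_mono2) (auto intro: norm_triangle_ineq)
  also have "\<dots> \<le> (1 - 1/2) powr (1 - r) * cmod x powr r + (1/2) powr (1 - r) * cmod y powr r"
    using r by (intro conv_ineq) auto
  also have "(1 - 1/2::real) powr (1 - r) = 2 powr (r - 1)"
    by (simp add: powr_divide powr_diff)
  also have "(1/2::real) powr (1 - r) = 2 powr (r - 1)"
    by (simp add: powr_divide powr_diff)
  finally show ?thesis by (simp add: algebra_simps)
qed

lemma lp_add_r: assumes "lp r x" "lp r y" "r \<ge> 1" shows "lp r (\<lambda>n. x n + y n)"
  unfolding lp_def
proof (rule summable_comparison_test'[of "\<lambda>n. 2 powr (r - 1) * (cmod (x n) powr r + cmod (y n) powr r)" 0])
  show "summable (\<lambda>n. 2 powr (r - 1) * (cmod (x n) powr r + cmod (y n) powr r))"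
    using assms unfolding lp_def by (intro summable_mult summable_add)
  fix n show "norm (cmod (x n + y n) powr r) \<le> 2 powr (r - 1) * (cmod (x n) powr r + cmod (y n) powr r)"
    using sum_powr_le_r[OF assms(3)] by simp
qed

lemma Np_add_le_r: assumes "lp r x" "lp r y" "r \<ge> 1"
  shows "Np r (\<lambda>n. x n + y n) \<le> 2 powr (r - 1) * (Np r x + Np r y)"
proof -
  have "Np r (\<lambda>n. x n + y n) \<le> (\<Sum>n. 2 powr (r - 1) * (cmod (x n) powr r + cmod (y n) powr r))"
    unfolding Np_def using lp_add_r[OF assms] assms sum_powr_le_r[OF assms(3)] unfolding lp_def
    by (intro suminf_le) (auto intro!: summable_mult summable_add)
  also have "\<dots> = 2 powr (r - 1) * (Np r x + Np r y)"
    using assms unfolding lp_def Np_def by (simp add: suminf_mult suminf_add summable_add)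
  finally show ?thesis .
qed

definition shL :: "(nat \<Rightarrow> complex) \<Rightarrow> nat \<Rightarrow> complex" where "shL t n = t (Suc n)"

lemma shL_lp: assumes "lp r t" shows "lp r (shL t)" "Np r (shL t) \<le> Np r t"
proof -
  show l: "lp r (shL t)" using assms unfolding lp_def shL_def by (subst summable_Suc_iff)
  have "Np r t = (\<Sum>n. cmod (t (Suc n)) powr r) + cmod (t 0) powr r"
    using assms unfolding Np_def lp_def by (subst suminf_split_head) auto
  then show "Np r (shL t) \<le> Np r t" by (simp add: Np_def shL_def)
qed

lemma lp_diff_r: assumes "lp r x" "lp r y" "r \<ge> 1" shows "lp r (\<lambda>n. x n - y n)"
  using lp_add_r[OF assms(1) lp_scale[OF assms(2), of "-1"] assms(3)] by simp

definition cof :: "(nat \<Rightarrow> complex) \<Rightarrow> nat \<Rightarrow> complex" where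
  "cof t n = t n + kap n * t (Suc n)"

definition Ccof where "Ccof = 2 powr (q - 1) * (1 + Kb powr q)"

lemma Ccof_pos: "Ccof > 0" unfolding Ccof_def by (simp add: add_pos_nonneg)

lemma cof_lp: assumes "lp q t" shows "lp q (cof t)" "Np q (cof t) \<le> Ccof * Np q t"
proof -
  have q1: "q \<ge> 1" using q by simp
  have l1: "lp q (\<lambda>n. kap n * shL t n)" "Np q (\<lambda>n. kap n * shL t n) \<le> Kb powr q * Np q (shL t)"
    using lp_mult_bdd[OF shL_lp(1)[OF assms] q(4) Kb(1)] by auto
  have e: "cof t = (\<lambda>n. t n + kap n * shL t n)" by (auto simp: cof_def shL_def)
  show "lp q (cof t)" unfolding e by (rule lp_add_r[OF assms l1(1) q1])
  have "Np q (cof t) \<le> 2 powr (q - 1) * (Np q t + Np q (\<lambda>n. kap n * shL t n))"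
    unfolding e by (rule Np_add_le_r[OF assms l1(1) q1])
  also have "\<dots> \<le> 2 powr (q - 1) * (Np q t + Kb powr q * Np q t)"
  proof -
    have "Kb powr q * Np q (shL t) \<le> Kb powr q * Np q t" by (rule mult_left_mono[OF shL_lp(2)[OF assms]]) simp
    then show ?thesis using l1(2) by (intro mult_left_mono add_left_mono) auto
  qed
  finally show "Np q (cof t) \<le> Ccof * Np q t" by (simp add: Ccof_def algebra_simps)
qed

definition phi :: "(nat \<Rightarrow> complex) \<Rightarrow> cfunctional" where
  "phi t = (\<lambda>g. if g \<in> lpab a b p then (\<Sum>n. coefs a b p g n * cof t n) else 0)"

lemma phi_sums: assumes "lp q t" "g \<in> lpab a b p"
  shows "(\<lambda>n. coefs a b p g n * cof t n) sums phi t g"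
  using holder_summable[OF rep_lp[OF lpab_rep[OF assms(2)]] cof_lp(1)[OF assms(1)]] assms(2)
  by (simp add: phi_def summable_sums)

lemma phi_bound: assumes "lp q t" "g \<in> lpab a b p"
  shows "cmod (phi t g) \<le> (Ccof * Np q t) powr (1/q) * lpab_norm a b p g"
proof -
  have "cmod (phi t g) \<le> Np p (coefs a b p g) powr (1/p) * Np q (cof t) powr (1/q)"
    using holder_abs[OF rep_lp[OF lpab_rep[OF assms(2)]] cof_lp(1)[OF assms(1)]] assms(2)
    by (simp add: phi_def)
  also have "\<dots> \<le> Np p (coefs a b p g) powr (1/p) * (Ccof * Np q t) powr (1/q)"
    using cof_lp[OF assms(1)] q by (intro mult_left_mono powr_mono2) (auto intro: Np_nonneg)
  finally show ?thesis by (simp add: lpab_norm_def Np_def mult_ac)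
qed

lemma phi_dual: assumes "lp q t" shows "phi t \<in> dual a b p"
proof -
  have "bl (phi t)"
  proof (rule blI[where C = "(Ccof * Np q t) powr (1/q)"])
    fix f g assume f: "f \<in> lpab a b p" and g: "g \<in> lpab a b p"
    have "(\<lambda>n. coefs a b p f n * cof t n + coefs a b p g n * cof t n) sums (phi t f + phi t g)"
      by (intro sums_add phi_sums assms f g)
    moreover have "(\<lambda>n. coefs a b p (\<lambda>z. f z + g z) n * cof t n) = (\<lambda>n. coefs a b p f n * cof t n + coefs a b p g n * cof t n)"
      by (simp add: coefs_add[OF f g] algebra_simps)
    ultimately show "phi t (\<lambda>z. f z + g z) = phi t f + phi t g"
      using phi_sums[OF assms lpab_add[OF f g]] by (metis sums_unique2)
  next
    fix c f assume f: "f \<in> lpab a b p"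
    have "(\<lambda>n. c * (coefs a b p f n * cof t n)) sums (c * phi t f)"
      by (intro sums_mult phi_sums assms f)
    moreover have "(\<lambda>n. coefs a b p (\<lambda>z. c * f z) n * cof t n) = (\<lambda>n. c * (coefs a b p f n * cof t n))"
      by (simp add: coefs_scale[OF f] algebra_simps)
    ultimately show "phi t (\<lambda>z. c * f z) = c * phi t f"
      using phi_sums[OF assms lpab_scale[OF f]] by (metis sums_unique2)
  qed (rule phi_bound[OF assms])
  then show ?thesis by (auto simp: dual_iff phi_def)
qed

lemma cof_diff: "cof (\<lambda>n. s n - t n) n = cof s n - cof t n"
  by (simp add: cof_def algebra_simps)

lemma phi_diff: assumes "lp q s" "lp q t"
  shows "phi s g - phi t g = phi (\<lambda>n. s n - t n) g"
proof (cases "g \<in> lpab a b p")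
  case True
  have "(\<lambda>n. coefs a b p g n * cof s n - coefs a b p g n * cof t n) sums (phi s g - phi t g)"
    by (intro sums_diff phi_sums assms True)
  moreover have "(\<lambda>n. coefs a b p g n * cof s n - coefs a b p g n * cof t n) = (\<lambda>n. coefs a b p g n * cof (\<lambda>n. s n - t n) n)"
    by (simp add: cof_diff algebra_simps)
  ultimately show ?thesis
    using phi_sums[OF lp_diff_r[OF assms] True] q by (metis sums_unique2 less_imp_le)
qed (simp add: phi_def)

lemma phi_dist: assumes "lp q s" "lp q t"
  shows "dual_norm a b p (\<lambda>f. phi s f - phi t f) \<le> (Ccof * Np q (\<lambda>n. s n - t n)) powr (1/q)"
proof (rule dual_norm_le)
  fix f assume f: "f \<in> lpab a b p"
  show "cmod (phi s f - phi t f) \<le> (Ccof * Np q (\<lambda>n. s n - t n)) powr (1/q) * lpab_norm a b p f"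
    unfolding phi_diff[OF assms] using q by (intro phi_bound[OF lp_diff_r[OF assms] f]) simp
qed simp

definition Bv :: "(nat \<Rightarrow> complex) \<Rightarrow> nat \<Rightarrow> complex" where "Bv t n = v n * t (Suc n)"

lemma Bv_lp: assumes "lp q t" shows "lp q (Bv t)"
proof -
  have "lp q (\<lambda>n. v n * shL t n)" using lp_mult_bdd(1)[OF shL_lp(1)[OF assms] q(4) Mb(1)] .
  then show ?thesis unfolding Bv_def shL_def .
qed

lemma Bv_pow_lp: "lp q t \<Longrightarrow> lp q ((Bv ^^ n) t)"
  by (induction n) (auto intro: Bv_lp)

lemma rearr: assumes x: "lp p x" and t: "lp q t"
  shows "(\<lambda>n. t n / a n * mu x n) sums (\<Sum>n. x n * cof t n)"
proof -
  have l1: "lp q (\<lambda>n. kap n * shL t n)" using lp_mult_bdd(1)[OF shL_lp(1)[OF t] q(4) Kb(1)] .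
  have sA: "(\<lambda>n. x n * t n) sums (\<Sum>n. x n * t n)" using holder_summable[OF x t] by (simp add: summable_sums)
  have sB: "(\<lambda>n. x n * (kap n * shL t n)) sums (\<Sum>n. x n * (kap n * shL t n))"
    using holder_summable[OF x l1] by (simp add: summable_sums)
  have sB': "shR (\<lambda>n. x n * (kap n * shL t n)) sums (\<Sum>n. x n * (kap n * shL t n))"
  proof -
    have "(\<lambda>n. shR (\<lambda>n. x n * (kap n * shL t n)) (Suc n)) sums (\<Sum>n. x n * (kap n * shL t n))"
      using sB by (simp add: shR_def)
    then show ?thesis by (subst (asm) sums_Suc_iff) (simp add: shR_def)
  qed
  have e1: "(\<lambda>n. t n / a n * mu x n) = (\<lambda>n. x n * t n + shR (\<lambda>n. x n * (kap n * shL t n)) n)"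
    using anz by (auto simp: mu_def shR_def shL_def kap_def field_simps split: nat.split)
  have e2: "(\<lambda>n. x n * cof t n) = (\<lambda>n. x n * t n + x n * (kap n * shL t n))"
    by (auto simp: cof_def shL_def algebra_simps)
  have s1: "(\<lambda>n. x n * cof t n) sums ((\<Sum>n. x n * t n) + (\<Sum>n. x n * (kap n * shL t n)))"
    unfolding e2 by (rule sums_add[OF sA sB])
  have s2: "(\<lambda>n. t n / a n * mu x n) sums ((\<Sum>n. x n * t n) + (\<Sum>n. x n * (kap n * shL t n)))"
    unfolding e1 by (rule sums_add[OF sA sB'])
  show ?thesis using s2 sums_unique[OF s1] by simp
qed

lemma phi_adj: assumes t: "lp q t" shows "Fw_adj a b p w (phi t) = phi (Bv t)"
proof
  fix g show "Fw_adj a b p w (phi t) g = phi (Bv t) g"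
  proof (cases "g \<in> lpab a b p")
    case False then show ?thesis by (simp add: Fw_adj_def phi_def)
  next
    case True
    let ?l = "coefs a b p g" and ?l' = "coefs a b p (Fw a b w g)"
    have r: "represents a b p ?l g" by (rule lpab_rep[OF True])
    have r': "represents a b p ?l' (Fw a b w g)" by (rule lpab_rep[OF Fw_in[OF True]])
    have m': "mu ?l' n = (case n of 0 \<Rightarrow> 0 | Suc k \<Rightarrow> w k * mu ?l k)" for n
      using rep_taylor[OF r', of n] Fw_taylor_0[OF r] Fw_taylor_Suc[OF r] rep_taylor[OF r]
      by (cases n) auto
    have s1: "(\<lambda>n. t n / a n * mu ?l' n) sums Fw_adj a b p w (phi t) g"
      using rearr[OF rep_lp[OF r'] t] Fw_in[OF True] True by (simp add: Fw_adj_def phi_def)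
    have "(\<lambda>n. t (Suc n) / a (Suc n) * mu ?l' (Suc n)) sums Fw_adj a b p w (phi t) g"
      using s1 by (subst sums_Suc_iff) (simp add: m')
    moreover have "(\<lambda>n. t (Suc n) / a (Suc n) * mu ?l' (Suc n)) = (\<lambda>n. Bv t n / a n * mu ?l n)"
      using anz by (auto simp: m' Bv_def v_def field_simps)
    ultimately have s2: "(\<lambda>n. Bv t n / a n * mu ?l n) sums Fw_adj a b p w (phi t) g" by simp
    have s3: "(\<lambda>n. Bv t n / a n * mu ?l n) sums phi (Bv t) g"
      using rearr[OF rep_lp[OF r] Bv_lp[OF t]] True by (simp add: phi_def)
    show ?thesis using sums_unique2[OF s2 s3] .
  qed
qed

lemma phi_adj_pow: "lp q t \<Longrightarrow> (Fw_adj a b p w ^^ n) (phi t) = phi ((Bv ^^ n) t)"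
  by (induction n) (auto simp: phi_adj Bv_pow_lp)


primrec sb :: "(nat \<Rightarrow> complex) \<Rightarrow> nat \<Rightarrow> nat \<Rightarrow> complex" where
  "sb c N 0 = 0"
| "sb c N (Suc j) = c (N - Suc j) - kap (N - Suc j) * sb c N j"

definition srec :: "(nat \<Rightarrow> complex) \<Rightarrow> nat \<Rightarrow> nat \<Rightarrow> complex" where
  "srec c N n = (if n < N then sb c N (N - n) else 0)"

lemma srec_cof: "cof (srec c N) n = (if n < N then c n else 0)"
proof (cases "n < N")
  case True
  have e: "N - n = Suc (N - Suc n)" using True by arith
  have e2: "N - Suc (N - Suc n) = n" using True by arith
  have "srec c N (Suc n) = sb c N (N - Suc n)"
    using True by (cases "Suc n < N") (auto simp: srec_def)
  then show ?thesis using True by (simp add: cof_def srec_def e e2)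
qed (simp add: cof_def srec_def)

lemma srec_supp: "n \<ge> N \<Longrightarrow> srec c N n = 0" by (simp add: srec_def)

lemma fin_lp: assumes "\<And>n. n \<ge> N \<Longrightarrow> s n = 0" "r > 0" shows "lp r s"
  unfolding lp_def by (rule summable_finite[of "{..<N}"]) (use assms in auto)

lemma srec_lp: "lp q (srec c N)" by (rule fin_lp[OF srec_supp]) (use q in auto)

lemma phi_srec: assumes "g \<in> lpab a b p"
  shows "phi (srec c N) g = (\<Sum>n<N. coefs a b p g n * c n)"
proof -
  have "(\<lambda>n. coefs a b p g n * cof (srec c N) n) = (\<lambda>n. if n \<in> {..<N} then coefs a b p g n * c n else 0)"
    by (auto simp: srec_cof)
  then have "(\<lambda>n. coefs a b p g n * cof (srec c N) n) sums (\<Sum>n<N. coefs a b p g n * c n)"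
    using sums_If_finite_set[of "{..<N}" "\<lambda>n. coefs a b p g n * c n"] by simp
  then show ?thesis using phi_sums[OF srec_lp assms] by (metis sums_unique2)
qed

lemma dense_fin: assumes "\<psi> \<in> dual a b p" "e > 0"
  shows "\<exists>N s. lp q s \<and> (\<forall>n\<ge>N. s n = 0) \<and> dual_norm a b p (\<lambda>f. \<psi> f - phi s f) < e"
proof -
  have bl: "bl \<psi>" by (rule dual_bl[OF assms(1)])
  let ?c = "dc \<psi>"
  have c: "lp q ?c" by (rule dual_c_lq(1)[OF bl])
  have t: "(\<lambda>N. Np q (tlz N ?c) powr (1/q)) \<longlonglongrightarrow> 0"
    using q tlz_lp[OF c] by (intro tendsto_zero_powrI[OF tlz_tendsto[OF c]]) (auto intro!: always_eventually Np_nonneg)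
  then obtain N where N: "Np q (tlz N ?c) powr (1/q) < e"
    using assms(2) order_tendstoD(2)[OF t, of e] by (auto simp: eventually_sequentially)
  have "dual_norm a b p (\<lambda>f. \<psi> f - phi (srec ?c N) f) \<le> Np q (tlz N ?c) powr (1/q)"
  proof (rule dual_norm_le)
    fix f assume f: "f \<in> lpab a b p"
    show "cmod (\<psi> f - phi (srec ?c N) f) \<le> Np q (tlz N ?c) powr (1/q) * lpab_norm a b p f"
      using dual_tail[OF bl f, of N] by (simp add: phi_srec[OF f] mult_ac)
  qed simp
  then show ?thesis using N srec_lp srec_supp by (intro exI[of _ N] exI[of _ "srec ?c N"]) auto
qed

end


context HC begin

definition PP :: "nat \<Rightarrow> complex" where "PP n = (\<Prod>i<n. v i)"
definition pv :: "nat \<Rightarrow> nat \<Rightarrow> complex" where "pv j m = (\<Prod>i\<in>{j..<j+m}. v i)"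

lemma Bv_pow: "(Bv ^^ m) x n = pv n m * x (n + m)"
proof (induction m arbitrary: n)
  case 0 then show ?case by (simp add: pv_def)
next
  case (Suc m)
  have "(Bv ^^ Suc m) x n = v n * (pv (Suc n) m * x (Suc n + m))" by (simp add: Bv_def Suc)
  moreover have "v n * pv (Suc n) m = pv n (Suc m)"
    unfolding pv_def by (simp add: prod.atLeast_Suc_lessThan[symmetric])
  ultimately show ?case by (simp add: mult_ac)
qed

lemma PP_split: "PP (j + m) = PP j * pv j m"
  unfolding PP_def pv_def lessThan_atLeast0 by (rule prod.atLeastLessThan_concat[symmetric]) auto

lemma PP_nz: "PP n \<noteq> 0" by (simp add: PP_def nz_v)
lemma pv_nz: "pv j m \<noteq> 0" by (simp add: pv_def nz_v)

lemma pv_le: "cmod (pv j m) \<le> Mb ^ m"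
proof -
  have "cmod (pv j m) \<le> (\<Prod>i\<in>{j..<j+m}. cmod (v i))" unfolding pv_def by (rule norm_prod_le)
  also have "\<dots> \<le> (\<Prod>i\<in>{j..<j+m}. Mb)" by (intro prod_mono) (auto intro: Mb(1))
  also have "\<dots> = Mb ^ m" by simp
  finally show ?thesis .
qed

lemma exists_m:
  assumes unb: "\<not> bdd_above (range (\<lambda>n. cmod (PP n)))"
  shows "\<exists>m\<ge>L. \<forall>j<len. cmod (pv j m) \<ge> H"
proof -
  define Q where "Q = 1 + (\<Sum>j<len. cmod (PP j))"
  have Q1: "Q \<ge> 1" by (simp add: Q_def sum_nonneg)
  have PQ: "cmod (PP j) \<le> Q" if "j < len" for j
  proof -
    have "cmod (PP j) \<le> (\<Sum>j<len. cmod (PP j))" using that by (intro member_le_sum) auto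
    then show ?thesis by (simp add: Q_def)
  qed
  define H' where "H' = max H 0 * Q * Mb ^ len"
  have H'0: "H' \<ge> 0" unfolding H'_def using Q1 Mb(2) by simp
  have "\<exists>n\<ge>L + len. cmod (PP n) > H'"
  proof (rule ccontr)
    assume "\<not> ?thesis"
    then have le: "\<forall>n\<ge>L + len. cmod (PP n) \<le> H'" by auto
    have "cmod (PP n) \<le> H' + (\<Sum>k<L + len. cmod (PP k))" for n
    proof (cases "n < L + len")
      case True
      then have "cmod (PP n) \<le> (\<Sum>k<L + len. cmod (PP k))" by (intro member_le_sum) auto
      then show ?thesis using H'0 by simp
    next
      case False then show ?thesis using le by (simp add: sum_nonneg add_increasing2)
    qed
    then have "bdd_above (range (\<lambda>n. cmod (PP n)))" by (intro bdd_aboveI) auto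
    with unb show False by simp
  qed
  then obtain n where n: "n \<ge> L + len" "cmod (PP n) > H'" by auto
  define m where "m = n - len"
  have "m \<ge> L" using n by (simp add: m_def)
  moreover have "cmod (pv j m) \<ge> H" if j: "j < len" for j
  proof -
    have e1: "PP n = PP (j + m) * pv (j + m) (len - j)"
      using PP_split[of "j + m" "len - j"] j n by (simp add: m_def)
    have "cmod (PP n) \<le> cmod (PP (j + m)) * Mb ^ len"
    proof -
      have "cmod (PP n) = cmod (PP (j + m)) * cmod (pv (j + m) (len - j))" by (simp add: e1 norm_mult)
      also have "\<dots> \<le> cmod (PP (j + m)) * Mb ^ (len - j)" by (intro mult_left_mono pv_le) auto
      also have "\<dots> \<le> cmod (PP (j + m)) * Mb ^ len" using Mb(2) by (intro mult_left_mono power_increasing) auto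
      finally show ?thesis .
    qed
    moreover have "cmod (PP (j + m)) = cmod (PP j) * cmod (pv j m)" by (simp add: PP_split norm_mult)
    ultimately have "max H 0 * Q * Mb ^ len < cmod (PP j) * cmod (pv j m) * Mb ^ len"
      using n(2) by (simp add: H'_def)
    then have "max H 0 * Q < cmod (PP j) * cmod (pv j m)" using Mb(2) by (simp add: mult_less_cancel_right)
    also have "\<dots> \<le> Q * cmod (pv j m)" using PQ[OF j] by (intro mult_right_mono) auto
    finally have "max H 0 < cmod (pv j m)" using Q1 by (simp add: mult.commute)
    then show ?thesis by simp
  qed
  ultimately show ?thesis by blast
qed


definition Mq where "Mq = Mb powr q"
lemma Mq1: "Mq \<ge> 1" unfolding Mq_def using Mb(2) q by (intro ge_one_powr_ge_zero) auto

lemma pv_powr_le: "cmod (pv j m) powr q \<le> Mq ^ m"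
proof -
  have "cmod (pv j m) powr q \<le> (Mb ^ m) powr q" using q by (intro powr_mono2 pv_le) auto
  also have "(Mb ^ m) powr q = Mq ^ m" unfolding Mq_def using Mb(2)
    by (simp add: powr_realpow[symmetric] powr_powr mult.commute)
  finally show ?thesis .
qed

lemma gsum: "(\<Sum>i\<in>{Suc k..<K}. (1/2::real) ^ i) \<le> (1/2) ^ k"
proof (cases "Suc k \<le> K")
  case True
  have "(\<Sum>i\<in>{Suc k..<K}. (1/2::real) ^ i) = (\<Sum>i\<in>{0..<K - Suc k}. (1/2) ^ (i + Suc k))"
    using sum.shift_bounds_nat_ivl[of "\<lambda>i. (1/2::real) ^ i" 0 "Suc k" "K - Suc k"] True by simp
  also have "\<dots> \<le> (\<Sum>i. (1/2::real) ^ (i + Suc k))"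
    by (intro sum_le_suminf) (auto intro!: summable_mult2 simp: power_add)
  also have "(\<Sum>i. (1/2::real) ^ (i + Suc k)) = (\<Sum>i. (1/2::real) ^ i) * (1/2) ^ Suc k"
    by (subst suminf_mult2) (auto simp: power_add)
  also have "\<dots> = (1/2) ^ k" by (simp add: suminf_geometric)
  finally show ?thesis .
qed simp

context
  fixes yt :: "nat \<Rightarrow> nat \<Rightarrow> complex"
  assumes ysupp: "\<And>k j. k < j \<Longrightarrow> yt k j = 0"
    and unb: "\<not> bdd_above (range (\<lambda>n. cmod (PP n)))"
begin

definition Yk where "Yk k = 1 + (\<Sum>j<Suc k. cmod (yt k j))"
definition eta where "eta i mp = ((1/2) ^ i / Mq ^ mp / (i + 2)) powr (1/q)"

lemma Yk: "Yk k \<ge> 1" "cmod (yt k j) \<le> Yk k"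
proof -
  show "Yk k \<ge> 1" by (simp add: Yk_def sum_nonneg)
  show "cmod (yt k j) \<le> Yk k"
  proof (cases "j < Suc k")
    case True
    then have "cmod (yt k j) \<le> (\<Sum>j<Suc k. cmod (yt k j))" by (intro member_le_sum) auto
    then show ?thesis by (simp add: Yk_def)
  next
    case False then show ?thesis using ysupp[of k j] \<open>Yk k \<ge> 1\<close> by simp
  qed
qed

lemma eta_pos: "eta i mp > 0" using Mq1 by (simp add: eta_def)

definition mstep where "mstep k mk = (SOME m'. m' \<ge> mk + Suc k \<and>
   (\<forall>j<Suc (Suc k). cmod (pv j m') \<ge> Yk (Suc k) / eta (Suc k) mk))"

lemma mstep: "mstep k mk \<ge> mk + Suc k \<and> (\<forall>j<Suc (Suc k). cmod (pv j (mstep k mk)) \<ge> Yk (Suc k) / eta (Suc k) mk)"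
proof -
  have "\<exists>m'. m' \<ge> mk + Suc k \<and> (\<forall>j<Suc (Suc k). cmod (pv j m') \<ge> Yk (Suc k) / eta (Suc k) mk)"
    using exists_m[OF unb] by blast
  from someI_ex[OF this] show ?thesis unfolding mstep_def .
qed

primrec mm where "mm 0 = 0" | "mm (Suc k) = mstep k (mm k)"

lemma mm_Suc: "mm (Suc k) \<ge> mm k + Suc k" using mstep by simp
lemma mm_mono: "i \<le> j \<Longrightarrow> mm i \<le> mm j"
proof (induction j rule: dec_induct)
  case (step n)
  have "mm n \<le> mm (Suc n)" using mm_Suc[of n] by linarith
  with step show ?case by linarith
qed simp
lemma mm_ge: "mm k \<ge> k"
proof (induction k)
  case (Suc k)
  have "mm k + Suc k \<le> mm (Suc k)" by (rule mm_Suc)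
  with Suc show ?case by linarith
qed simp

lemma mm_pv: "j < Suc (Suc k) \<Longrightarrow> cmod (pv j (mm (Suc k))) \<ge> Yk (Suc k) / eta (Suc k) (mm k)"
  using mstep by simp

definition blk where "blk n = (GREATEST k. mm k \<le> n)"

lemma blk: "mm (blk n) \<le> n" "n < mm (Suc (blk n))"
proof -
  have b: "\<forall>y. mm y \<le> n \<longrightarrow> y \<le> n" using mm_ge order.trans by blast
  show 1: "mm (blk n) \<le> n" unfolding blk_def by (rule GreatestI_nat[of _ 0 n]) (use b in auto)
  show "n < mm (Suc (blk n))"
  proof (rule ccontr)
    assume "\<not> ?thesis"
    then have "Suc (blk n) \<le> blk n" unfolding blk_def[of n] by (intro Greatest_le_nat[of _ _ n]) (use b in auto)
    then show False by simp
  qed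
qed

lemma blk_eq: assumes "mm k \<le> n" "n < mm (Suc k)" shows "blk n = k"
proof (rule ccontr)
  assume ne: "blk n \<noteq> k"
  show False
  proof (cases "blk n < k")
    case True
    then have "mm (Suc (blk n)) \<le> mm k" by (intro mm_mono) simp
    then show False using blk(2)[of n] assms by simp
  next
    case False
    then have "Suc k \<le> blk n" using ne by simp
    then have "mm (Suc k) \<le> mm (blk n)" by (rule mm_mono)
    then show False using blk(1)[of n] assms by simp
  qed
qed

definition xs where "xs n = yt (blk n) (n - mm (blk n)) / pv (n - mm (blk n)) (mm (blk n))"

lemma xs_block: assumes "j < mm (Suc k) - mm k" shows "xs (mm k + j) = yt k j / pv j (mm k)"
proof -
  have "blk (mm k + j) = k" using assms by (intro blk_eq) auto
  then show ?thesis by (simp add: xs_def)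
qed

lemma term_bound: "cmod (yt (Suc i) j / pv j (mm (Suc i))) \<le> eta (Suc i) (mm i)"
proof (cases "j < Suc (Suc i)")
  case True
  have pv: "cmod (pv j (mm (Suc i))) \<ge> Yk (Suc i) / eta (Suc i) (mm i)" by (rule mm_pv[OF True])
  have Y: "Yk (Suc i) > 0" using Yk(1)[of "Suc i"] by linarith
  have pvp: "cmod (pv j (mm (Suc i))) > 0" using pv_nz by simp
  have "cmod (yt (Suc i) j) \<le> Yk (Suc i)" by (rule Yk(2))
  also have "Yk (Suc i) \<le> eta (Suc i) (mm i) * cmod (pv j (mm (Suc i)))"
    using pv eta_pos[of "Suc i" "mm i"] by (simp add: divide_le_eq mult.commute)
  finally show ?thesis using pvp by (simp add: norm_divide divide_le_eq)
next
  case False then show ?thesis using ysupp[of "Suc i" j] eta_pos[of "Suc i" "mm i"] by simp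
qed

definition bs where "bs k = (\<Sum>n\<in>{mm k..<mm (Suc k)}. cmod (xs n) powr q)"

lemma bs_eq: "bs k = (\<Sum>j<Suc k. cmod (yt k j / pv j (mm k)) powr q)"
proof -
  define G where "G = mm (Suc k) - mm k"
  have G: "G \<ge> Suc k" using mm_Suc[of k] by (simp add: G_def)
  have "bs k = (\<Sum>j\<in>{0..<G}. cmod (xs (j + mm k)) powr q)"
    unfolding bs_def using sum.shift_bounds_nat_ivl[of "\<lambda>n. cmod (xs n) powr q" 0 "mm k" G] mm_Suc[of k]
    by (simp add: G_def)
  also have "\<dots> = (\<Sum>j\<in>{0..<G}. cmod (yt k j / pv j (mm k)) powr q)"
  proof (intro sum.cong refl)
    fix j assume "j \<in> {0..<G}"
    then have "j < mm (Suc k) - mm k" by (simp add: G_def)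
    from xs_block[OF this] show "cmod (xs (j + mm k)) powr q = cmod (yt k j / pv j (mm k)) powr q"
      by (simp add: add.commute)
  qed
  also have "\<dots> = (\<Sum>j\<in>{0..<Suc k}. cmod (yt k j / pv j (mm k)) powr q)"
    using G ysupp q by (intro sum.mono_neutral_right) auto
  finally show ?thesis by (simp add: atLeast0LessThan)
qed

lemma bs_bound: "bs (Suc i) \<le> (1/2) ^ Suc i / Mq ^ mm i"
proof -
  have "bs (Suc i) \<le> (\<Sum>j<Suc (Suc i). eta (Suc i) (mm i) powr q)"
    unfolding bs_eq using q by (intro sum_mono powr_mono2 term_bound) auto
  also have "\<dots> = Suc (Suc i) * ((1/2) ^ Suc i / Mq ^ mm i / (Suc i + 2))"
    using q Mq1 by (simp add: eta_def powr_powr)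
  also have "\<dots> \<le> (1/2) ^ Suc i / Mq ^ mm i"
  proof -
    have X: "(1/2::real) ^ Suc i / Mq ^ mm i \<ge> 0" using Mq1 by simp
    have f: "real (Suc (Suc i)) / (real (Suc i) + 2) \<le> 1" by simp
    have "real (Suc (Suc i)) * ((1/2) ^ Suc i / Mq ^ mm i / (real (Suc i) + 2)) =
        (1/2) ^ Suc i / Mq ^ mm i * (real (Suc (Suc i)) / (real (Suc i) + 2))" by simp
    also have "\<dots> \<le> (1/2) ^ Suc i / Mq ^ mm i" by (rule mult_left_le[OF f X])
    finally show ?thesis by simp
  qed
  finally show ?thesis .
qed

lemma group: "k0 \<le> K \<Longrightarrow> (\<Sum>n\<in>{mm k0..<mm K}. g n) = (\<Sum>k\<in>{k0..<K}. \<Sum>n\<in>{mm k..<mm (Suc k)}. g n)"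
proof (induction K rule: dec_induct)
  case base then show ?case by simp
next
  case (step K)
  have "(\<Sum>n\<in>{mm k0..<mm (Suc K)}. g n) = (\<Sum>n\<in>{mm k0..<mm K}. g n) + (\<Sum>n\<in>{mm K..<mm (Suc K)}. g n)"
    using step mm_mono[of k0 K] mm_mono[of K "Suc K"] by (intro sum.atLeastLessThan_concat[symmetric]) auto
  then show ?case using step by simp
qed

lemma tail_bound: "(\<Sum>n\<in>{mm (Suc k)..<mm K}. cmod (xs n) powr q) \<le> (1/2) ^ k / Mq ^ mm k"
proof (cases "Suc k \<le> K")
  case True
  have "(\<Sum>n\<in>{mm (Suc k)..<mm K}. cmod (xs n) powr q) = (\<Sum>i\<in>{Suc k..<K}. bs i)"
    unfolding bs_def by (rule group[OF True])
  also have "\<dots> \<le> (\<Sum>i\<in>{Suc k..<K}. (1/2) ^ i / Mq ^ mm k)"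
  proof (intro sum_mono)
    fix i assume i: "i \<in> {Suc k..<K}"
    then obtain i' where i': "i = Suc i'" "i' \<ge> k" by (cases i) auto
    have "bs i \<le> (1/2) ^ i / Mq ^ mm i'" using bs_bound[of i'] i' by simp
    also have "\<dots> \<le> (1/2) ^ i / Mq ^ mm k"
      using Mq1 mm_mono[OF i'(2)] by (intro divide_left_mono power_increasing) auto
    finally show "bs i \<le> (1/2) ^ i / Mq ^ mm k" .
  qed
  also have "\<dots> = (\<Sum>i\<in>{Suc k..<K}. (1/2::real) ^ i) / Mq ^ mm k" by (simp add: sum_divide_distrib)
  also have "\<dots> \<le> (1/2) ^ k / Mq ^ mm k" using Mq1 by (intro divide_right_mono gsum) auto
  finally show ?thesis .
next
  case False
  then have "mm K \<le> mm (Suc k)" by (intro mm_mono) simp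
  then show ?thesis using Mq1 by simp
qed

lemma xs_lp: "lp q xs"
proof -
  have b: "(\<Sum>n<N. cmod (xs n) powr q) \<le> bs 0 + 1" for N
  proof -
    have "(\<Sum>n<N. cmod (xs n) powr q) \<le> (\<Sum>n<mm N. cmod (xs n) powr q)"
      using mm_ge[of N] by (intro sum_mono2) auto
    also have "\<dots> = (\<Sum>n\<in>{mm 0..<mm N}. cmod (xs n) powr q)" by (simp add: atLeast0LessThan)
    also have "\<dots> = (\<Sum>n\<in>{mm 0..<mm (Suc 0)}. cmod (xs n) powr q) + (\<Sum>n\<in>{mm (Suc 0)..<mm N}. cmod (xs n) powr q)"
      if "N \<ge> 1" using that mm_mono[of 0 "Suc 0"] mm_mono[of "Suc 0" N] by (intro sum.atLeastLessThan_concat[symmetric]) auto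
    finally have 1: "N \<ge> 1 \<Longrightarrow> (\<Sum>n<N. cmod (xs n) powr q) \<le> bs 0 + (\<Sum>n\<in>{mm (Suc 0)..<mm N}. cmod (xs n) powr q)"
      by (simp add: bs_def)
    have 2: "(\<Sum>n\<in>{mm (Suc 0)..<mm N}. cmod (xs n) powr q) \<le> 1"
      using tail_bound[of 0 N] Mq1 by simp
    have "bs 0 \<ge> 0" by (simp add: bs_def sum_nonneg)
    show ?thesis
    proof (cases "N \<ge> 1")
      case True then show ?thesis using 1 2 by linarith
    next
      case False then have "N = 0" by simp
      then show ?thesis using \<open>bs 0 \<ge> 0\<close> by simp
    qed
  qed
  show ?thesis unfolding lp_def by (rule summableI_nonneg_bounded[OF _ b]) simp
qed

lemma approx_target: "Np q (\<lambda>j. (Bv ^^ mm k) xs j - yt k j) \<le> (1/2) ^ k"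
proof -
  define d where "d j = (Bv ^^ mm k) xs j - yt k j" for j
  define G where "G = mm (Suc k) - mm k"
  have G: "G \<ge> Suc k" using mm_Suc[of k] by (simp add: G_def)
  have d0: "d j = 0" if "j < G" for j
  proof -
    have "j < mm (Suc k) - mm k" using that by (simp add: G_def)
    from xs_block[OF this] have "xs (j + mm k) = yt k j / pv j (mm k)" by (simp add: add.commute)
    then show ?thesis using pv_nz[of j "mm k"] by (simp add: d_def Bv_pow)
  qed
  have d1: "cmod (d j) powr q \<le> Mq ^ mm k * cmod (xs (j + mm k)) powr q" if "j \<ge> G" for j
  proof -
    have "yt k j = 0" using that G by (intro ysupp) simp
    then have "cmod (d j) powr q = cmod (pv j (mm k)) powr q * cmod (xs (j + mm k)) powr q"
      by (simp add: d_def Bv_pow norm_mult powr_mult)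
    also have "\<dots> \<le> Mq ^ mm k * cmod (xs (j + mm k)) powr q" by (intro mult_right_mono pv_powr_le) auto
    finally show ?thesis .
  qed
  have b: "(\<Sum>j<J. cmod (d j) powr q) \<le> (1/2) ^ k" for J
  proof -
    have "(\<Sum>j<J. cmod (d j) powr q) \<le> (\<Sum>j<J + G. cmod (d j) powr q)"
      by (intro sum_mono2) auto
    also have "\<dots> = (\<Sum>j\<in>{0..<G}. cmod (d j) powr q) + (\<Sum>j\<in>{G..<J + G}. cmod (d j) powr q)"
      by (simp add: atLeast0LessThan[symmetric] sum.atLeastLessThan_concat)
    also have "(\<Sum>j\<in>{0..<G}. cmod (d j) powr q) = 0" using d0 q by simp
    also have "(\<Sum>j\<in>{G..<J + G}. cmod (d j) powr q) \<le> (\<Sum>j\<in>{G..<J + G}. Mq ^ mm k * cmod (xs (j + mm k)) powr q)"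
      by (intro sum_mono d1) auto
    also have "\<dots> = Mq ^ mm k * (\<Sum>n\<in>{G + mm k..<J + G + mm k}. cmod (xs n) powr q)"
      by (simp add: sum_distrib_left sum.shift_bounds_nat_ivl)
    also have "G + mm k = mm (Suc k)" using mm_Suc[of k] by (simp add: G_def)
    also have "(\<Sum>n\<in>{mm (Suc k)..<J + G + mm k}. cmod (xs n) powr q) \<le> (\<Sum>n\<in>{mm (Suc k)..<mm (J + G + mm k)}. cmod (xs n) powr q)"
      using mm_ge[of "J + G + mm k"] by (intro sum_mono2) auto
    also have "\<dots> \<le> (1/2) ^ k / Mq ^ mm k" by (rule tail_bound)
    finally show ?thesis using Mq1 by (simp add: mult_left_mono field_simps)
  qed
  have "lp q d" unfolding lp_def by (rule summableI_nonneg_bounded[OF _ b]) simp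
  then have "Np q d \<le> (1/2) ^ k" unfolding lp_def Np_def by (intro suminf_le_const b)
  then show ?thesis by (simp add: d_def[abs_def])
qed

end

end


context HC begin

definition toseq :: "(rat \<times> rat) list \<Rightarrow> nat \<Rightarrow> complex" where
  "toseq l n = (if n < length l then Complex (of_rat (fst (l ! n))) (of_rat (snd (l ! n))) else 0)"

definition ytg :: "nat \<Rightarrow> nat \<Rightarrow> complex" where
  "ytg k j = (if j \<le> k then toseq (fst (from_nat k :: (rat \<times> rat) list \<times> nat)) j else 0)"

lemma ytg_supp: "k < j \<Longrightarrow> ytg k j = 0" by (simp add: ytg_def)

lemma approx_complex: assumes "\<tau> > 0" shows "\<exists>r :: rat \<times> rat. cmod (z - Complex (of_rat (fst r)) (of_rat (snd r))) < \<tau>"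
proof -
  obtain x where x: "x \<in> \<rat>" "Re z - \<tau>/2 < x" "x < Re z + \<tau>/2"
    using Rats_dense_in_real[of "Re z - \<tau>/2" "Re z + \<tau>/2"] assms by auto
  obtain y where y: "y \<in> \<rat>" "Im z - \<tau>/2 < y" "y < Im z + \<tau>/2"
    using Rats_dense_in_real[of "Im z - \<tau>/2" "Im z + \<tau>/2"] assms by auto
  obtain rx where rx: "x = of_rat rx" using x(1) Rats_cases by blast
  obtain ry where ry: "y = of_rat ry" using y(1) Rats_cases by blast
  have "cmod (z - Complex x y) \<le> \<bar>Re (z - Complex x y)\<bar> + \<bar>Im (z - Complex x y)\<bar>" by (rule cmod_le)
  also have "\<dots> < \<tau>" using x y by simp
  finally show ?thesis using rx ry by (intro exI[of _ "(rx, ry)"]) simp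
qed

lemma approx_list: assumes "\<tau> > 0"
  shows "\<exists>l. length l = N \<and> (\<forall>n<N. cmod (s n - toseq l n) < \<tau>)"
proof -
  define P where "P n r = (cmod (s n - Complex (of_rat (fst r)) (of_rat (snd r))) < \<tau>)" for n r
  have ex: "\<exists>r. P n r" for n unfolding P_def by (rule approx_complex[OF assms])
  define l where "l = map (\<lambda>n. SOME r. P n r) [0..<N]"
  have "cmod (s n - toseq l n) < \<tau>" if "n < N" for n
    using someI_ex[OF ex[of n]] that by (simp add: toseq_def l_def P_def)
  then show ?thesis by (intro exI[of _ l]) (simp add: l_def)
qed

lemma dual_norm_swap: "dual_norm a b p (\<lambda>f. \<phi> f - \<psi> f) = dual_norm a b p (\<lambda>f. \<psi> f - \<phi> f)"
  unfolding dual_norm_def by (simp add: norm_minus_commute)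

lemma hyp_from_unb: assumes unb: "\<not> bdd_above (range (\<lambda>n. cmod (PP n)))"
  shows "adj_hypercyclic a b p w"
proof -
  define x0 where "x0 = xs ytg"
  have x0: "lp q x0" unfolding x0_def by (rule xs_lp[OF ytg_supp unb])
  have orb: "(Fw_adj a b p w ^^ mm ytg k) (phi x0) = phi ((Bv ^^ mm ytg k) x0)" for k
    by (rule phi_adj_pow[OF x0])
  have app: "Np q (\<lambda>j. (Bv ^^ mm ytg k) x0 j - ytg k j) \<le> (1/2) ^ k" for k
    unfolding x0_def by (rule approx_target[OF ytg_supp unb])
  have "\<forall>\<psi>\<in>dual a b p. \<forall>e>0. \<exists>n. dual_norm a b p (\<lambda>f. (Fw_adj a b p w ^^ n) (phi x0) f - \<psi> f) < e"
  proof (intro ballI allI impI)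
    fix \<psi> :: cfunctional and e :: real assume \<psi>: "\<psi> \<in> dual a b p" and e: "e > 0"
    have e3: "e / 3 > 0" using e by simp
    obtain N s where s: "lp q s" "\<forall>n\<ge>N. s n = 0" "dual_norm a b p (\<lambda>f. \<psi> f - phi s f) < e / 3"
      using dense_fin[OF \<psi> e3] by blast
    define \<eta> where "\<eta> = (e / 3) powr q / Ccof / (real N + 1)"
    have \<eta>: "\<eta> > 0" using e Ccof_pos by (simp add: \<eta>_def)
    obtain l where l: "length l = N" "\<forall>n<N. cmod (s n - toseq l n) < \<eta> powr (1/q)"
      using approx_list[of "\<eta> powr (1/q)" N s] \<eta> by auto
    have tl0: "toseq l n = 0" if "n \<ge> N" for n using that l(1) by (simp add: toseq_def)
    have ltl: "lp q (toseq l)" by (rule fin_lp[OF tl0]) (use q in auto)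
    have dsl: "dual_norm a b p (\<lambda>f. phi s f - phi (toseq l) f) < e / 3"
    proof -
      have supp: "\<And>n. N \<le> n \<Longrightarrow> s n - toseq l n = 0" using s(2) tl0 by simp
      have "Np q (\<lambda>n. s n - toseq l n) = Np q (\<lambda>n. if n < N then s n - toseq l n else 0)"
        using supp by (intro arg_cong[where f = "Np q"]) (auto simp: not_less)
      also have "\<dots> = (\<Sum>n<N. cmod (s n - toseq l n) powr q)" by (rule Np_fin(2)) (use q in auto)
      also have "\<dots> \<le> (\<Sum>n<N. \<eta>)"
      proof (intro sum_mono)
        fix n assume "n \<in> {..<N}"
        then have "cmod (s n - toseq l n) powr q \<le> (\<eta> powr (1/q)) powr q"
          using l(2) q by (intro powr_mono2) (auto intro: less_imp_le)
        then show "cmod (s n - toseq l n) powr q \<le> \<eta>" using \<eta> q by (simp add: powr_powr)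
      qed
      also have "\<dots> = real N * \<eta>" by simp
      finally have np: "Np q (\<lambda>n. s n - toseq l n) \<le> real N * \<eta>" .
      have "Ccof * Np q (\<lambda>n. s n - toseq l n) \<le> Ccof * (real N * \<eta>)"
        using np Ccof_pos by (intro mult_left_mono) auto
      also have "\<dots> = real N * ((e / 3) powr q / (real N + 1))"
      proof -
        have c1: "Ccof * \<eta> = (e / 3) powr q / (real N + 1)" unfolding \<eta>_def using Ccof_pos by simp
        then show ?thesis by (metis mult.left_commute)
      qed
      also have "\<dots> < (real N + 1) * ((e / 3) powr q / (real N + 1))"
        using e by (intro mult_strict_right_mono) auto
      also have "\<dots> = (e / 3) powr q" by simp
      finally have lt: "Ccof * Np q (\<lambda>n. s n - toseq l n) < (e / 3) powr q" .
      have "(Ccof * Np q (\<lambda>n. s n - toseq l n)) powr (1/q) < ((e / 3) powr q) powr (1/q)"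
        using lt q Ccof_pos Np_nonneg[OF lp_diff_r[OF s(1) ltl]] by (intro powr_less_mono2) auto
      also have "\<dots> = e / 3" using e q by (simp add: powr_powr)
      finally show ?thesis using phi_dist[OF s(1) ltl] by linarith
    qed
    have lim: "(\<lambda>k. (Ccof * (1/2) ^ k) powr (1/q)) \<longlonglongrightarrow> 0"
    proof -
      have "(\<lambda>k. Ccof * (1/2::real) ^ k) \<longlonglongrightarrow> 0"
        by (intro tendsto_mult_right_zero LIMSEQ_power_zero) auto
      from tendsto_zero_powrI[OF this tendsto_const[of "1/q"]] show ?thesis
        using q Ccof_pos by (auto intro!: always_eventually)
    qed
    obtain M where M: "\<forall>k\<ge>M. (Ccof * (1/2) ^ k) powr (1/q) < e / 3"
      using order_tendstoD(2)[OF lim e3] by (auto simp: eventually_sequentially)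
    have inf: "infinite {k. fst (from_nat k :: (rat \<times> rat) list \<times> nat) = l}"
    proof -
      have "range (\<lambda>i::nat. to_nat (l, i)) \<subseteq> {k. fst (from_nat k :: (rat \<times> rat) list \<times> nat) = l}" by (auto simp: from_nat_to_nat)
      moreover have "infinite (range (\<lambda>i::nat. to_nat (l, i)))"
        by (rule range_inj_infinite) (auto simp: inj_def)
      ultimately show ?thesis using infinite_super by blast
    qed
    then obtain k where k: "k \<ge> max M N" "fst (from_nat k :: (rat \<times> rat) list \<times> nat) = l"
      unfolding infinite_nat_iff_unbounded_le by blast
    have ytk: "ytg k = toseq l"
    proof
      fix j show "ytg k j = toseq l j"
        using k tl0[of j] by (auto simp: ytg_def)
    qed
    have d1: "dual_norm a b p (\<lambda>f. phi ((Bv ^^ mm ytg k) x0) f - phi (toseq l) f) < e / 3"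
    proof -
      have "dual_norm a b p (\<lambda>f. phi ((Bv ^^ mm ytg k) x0) f - phi (toseq l) f)
           \<le> (Ccof * Np q (\<lambda>j. (Bv ^^ mm ytg k) x0 j - toseq l j)) powr (1/q)"
        by (rule phi_dist[OF Bv_pow_lp[OF x0] ltl])
      also have "\<dots> \<le> (Ccof * (1/2) ^ k) powr (1/q)"
        using app[of k] q Ccof_pos Np_nonneg[OF lp_diff_r[OF Bv_pow_lp[OF x0] ltl]] ytk
        by (intro powr_mono2 mult_left_mono) auto
      also have "\<dots> < e / 3" using M k by auto
      finally show ?thesis .
    qed
    let ?A = "phi ((Bv ^^ mm ytg k) x0)" and ?Bp = "phi (toseq l)" and ?S = "phi s"
    have blA: "bl ?A" by (rule dual_bl[OF phi_dual[OF Bv_pow_lp[OF x0]]])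
    have blB: "bl ?Bp" by (rule dual_bl[OF phi_dual[OF ltl]])
    have blS: "bl ?S" by (rule dual_bl[OF phi_dual[OF s(1)]])
    have blP: "bl \<psi>" by (rule dual_bl[OF \<psi>])
    have "dual_norm a b p (\<lambda>f. ?A f - \<psi> f) \<le> dual_norm a b p (\<lambda>f. ?A f - ?Bp f) + dual_norm a b p (\<lambda>f. ?Bp f - \<psi> f)"
      by (rule dual_norm_tri[OF blA blB blP])
    also have "dual_norm a b p (\<lambda>f. ?Bp f - \<psi> f) \<le> dual_norm a b p (\<lambda>f. ?Bp f - ?S f) + dual_norm a b p (\<lambda>f. ?S f - \<psi> f)"
      by (rule dual_norm_tri[OF blB blS blP])
    also have "dual_norm a b p (\<lambda>f. ?Bp f - ?S f) = dual_norm a b p (\<lambda>f. ?S f - ?Bp f)" by (rule dual_norm_swap)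
    also have "dual_norm a b p (\<lambda>f. ?S f - \<psi> f) = dual_norm a b p (\<lambda>f. \<psi> f - ?S f)" by (rule dual_norm_swap)
    finally have "dual_norm a b p (\<lambda>f. ?A f - \<psi> f) < e" using d1 dsl s(3) by linarith
    then show "\<exists>n. dual_norm a b p (\<lambda>f. (Fw_adj a b p w ^^ n) (phi x0) f - \<psi> f) < e"
      by (intro exI[of _ "mm ytg k"]) (simp add: orb)
  qed
  then show ?thesis unfolding adj_hypercyclic_def using phi_dual[OF x0] by blast
qed

end


context HC begin

lemma taylor_Gm: "taylor_coeff (Gm m) k = (if k = m then 1 else 0)"
  using rep_taylor[OF rep_Gm, of m k] anz by (simp add: gco_def mu_lrec)

lemma Gm_in: "Gm m \<in> lpab a b p" using rep_Gm unfolding lpab_def by blast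

lemma Fw_Gm: "Fw a b w (Gm m) = (\<lambda>z. w m * Gm (Suc m) z)"
proof
  fix z show "Fw a b w (Gm m) z = w m * Gm (Suc m) z"
  proof (cases "z \<in> D")
    case True
    have "(\<lambda>k. taylor_coeff (Gm m) k * w k * z ^ Suc k) = (\<lambda>k. if k = m then w m * z ^ Suc m else 0)"
      by (auto simp: taylor_Gm)
    then have "(\<lambda>k. taylor_coeff (Gm m) k * w k * z ^ Suc k) sums (w m * z ^ Suc m)"
      using sums_single[of m "\<lambda>_. w m * z ^ Suc m"] by simp
    then show ?thesis using True by (simp add: Fw_def sums_iff Gm_def)
  qed (simp add: Fw_def Gm_def)
qed

definition pw where "pw j n = (\<Prod>i\<in>{j..<j+n}. w i)"

lemma Fw_pow_Gm: "(Fw a b w ^^ n) (Gm j) = (\<lambda>z. pw j n * Gm (j + n) z)"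
proof (induction n)
  case 0 then show ?case by (simp add: pw_def)
next
  case (Suc n)
  have "(Fw a b w ^^ Suc n) (Gm j) = Fw a b w (\<lambda>z. pw j n * Gm (j + n) z)" by (simp add: Suc)
  also have "\<dots> = (\<lambda>z. pw j n * Fw a b w (Gm (j + n)) z)" by (rule Fw_scale[OF Gm_in])
  also have "\<dots> = (\<lambda>z. pw j (Suc n) * Gm (j + Suc n) z)"
    by (simp add: Fw_Gm pw_def mult_ac)
  finally show ?case .
qed

lemma pv_pw: "pv j n = pw j n * a j / a (j + n)"
proof (induction n)
  case 0 then show ?case using anz by (simp add: pv_def pw_def)
next
  case (Suc n)
  have "pv j (Suc n) = pv j n * v (j + n)" by (simp add: pv_def)
  also have "\<dots> = pw j (Suc n) * a j / a (j + Suc n)"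
    using anz by (simp add: Suc pw_def v_def field_simps)
  finally show ?case .
qed

lemma lrec_zero: "(\<And>k. k < m \<Longrightarrow> \<rho> k = 0) \<Longrightarrow> k < m \<Longrightarrow> lrec \<rho> k = 0"
  by (induction k) auto

lemma gco_supp: "k < m \<Longrightarrow> gco m k = 0"
  unfolding gco_def by (rule lrec_zero) auto

lemma bidual_eval: assumes "g \<in> lpab a b p" shows "(\<lambda>\<theta>. \<theta> g) \<in> bidual a b p"
  unfolding bidual_def
proof (intro CollectI conjI ballI allI exI[of _ "lpab_norm a b p g"])
  fix \<theta> assume "\<theta> \<in> dual a b p"
  then show "cmod (\<theta> g) \<le> lpab_norm a b p g * dual_norm a b p \<theta>"
    using dual_le[OF dual_bl assms] by (simp add: mult.commute)
qed auto

lemma Gm_val_tendsto: assumes \<phi>: "\<phi> \<in> dual a b p" and bdd: "\<And>n. cmod (PP n) \<le> M0"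
  shows "(\<lambda>n. (Fw_adj a b p w ^^ n) \<phi> (Gm j)) \<longlonglongrightarrow> 0"
proof -
  have bl: "bl \<phi>" by (rule dual_bl[OF \<phi>])
  let ?c = "dc \<phi>"
  have c: "lp q ?c" by (rule dual_c_lq(1)[OF bl])
  define T where "T m = Np q (tlz m ?c) powr (1/q)" for m
  have T: "T \<longlonglongrightarrow> 0" unfolding T_def
    using q tlz_lp[OF c] by (intro tendsto_zero_powrI[OF tlz_tendsto[OF c]]) (auto intro!: always_eventually Np_nonneg)
  define K where "K = M0 / cmod (PP j) / cmod (a j) * Crec powr (1/p)"
  have val: "(Fw_adj a b p w ^^ n) \<phi> (Gm j) = pw j n * \<phi> (Gm (j + n))" for n
    using Fw_adj_pow_apply[OF Gm_in, of n \<phi> j] Fw_pow_Gm[of n j] bl_scale[OF bl Gm_in] by simp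
  have phiG: "cmod (\<phi> (Gm m)) \<le> Crec powr (1/p) / cmod (a m) * T m" for m
  proof -
    have s: "(\<lambda>k. gco m k * ?c k) sums \<phi> (Gm m)"
      using dual_sums[OF bl Gm_in] coefs_eq[OF rep_Gm] by simp
    have "(\<lambda>k. gco m k * ?c k) = (\<lambda>k. gco m k * tlz m ?c k)"
      by (auto simp: tlz_def gco_supp)
    with s have "\<phi> (Gm m) = (\<Sum>k. gco m k * tlz m ?c k)" by (simp add: sums_iff)
    then have h1: "cmod (\<phi> (Gm m)) \<le> Np p (gco m) powr (1/p) * T m"
      unfolding T_def using holder_abs[OF rep_lp[OF rep_Gm] tlz_lp[OF c]] by simp
    have h2: "Np p (gco m) powr (1/p) \<le> Crec powr (1/p) / cmod (a m)"
    proof -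
      have am: "cmod (a m) > 0" using anz by simp
      have n0: "Np p (gco m) \<ge> 0" by (rule Np_nonneg[OF rep_lp[OF rep_Gm]])
      have "Np p (gco m) \<le> Crec / cmod (a m) powr p"
        using Gm_norm[of m] am by (simp add: field_simps)
      then have "Np p (gco m) powr (1/p) \<le> (Crec / cmod (a m) powr p) powr (1/p)"
        using n0 p1 by (intro powr_mono2) auto
      also have "\<dots> = Crec powr (1/p) / cmod (a m)"
        using am p1 Crec_pos by (simp add: powr_divide powr_powr)
      finally show ?thesis .
    qed
    have "T m \<ge> 0" by (simp add: T_def)
    from mult_right_mono[OF h2 this] h1 show ?thesis by linarith
  qed
  have bnd: "cmod ((Fw_adj a b p w ^^ n) \<phi> (Gm j)) \<le> K * T (n + j)" for n
  proof -
    have pw: "pw j n / a (j + n) = pv j n / a j" using pv_pw[of j n] anz by (simp add: field_simps)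
    have pvb: "cmod (pv j n) \<le> M0 / cmod (PP j)"
    proof -
      have "cmod (PP j) * cmod (pv j n) \<le> M0" using bdd[of "j + n"] by (simp add: PP_split norm_mult)
      moreover have "cmod (PP j) > 0" using PP_nz[of j] by simp
      ultimately show ?thesis by (simp add: pos_le_divide_eq mult.commute)
    qed
    have Tn: "T (j + n) \<ge> 0" by (simp add: T_def)
    have "cmod ((Fw_adj a b p w ^^ n) \<phi> (Gm j)) = cmod (pw j n) * cmod (\<phi> (Gm (j + n)))"
      by (simp add: val norm_mult)
    also have "\<dots> \<le> cmod (pw j n) * (Crec powr (1/p) / cmod (a (j + n)) * T (j + n))"
      by (intro mult_left_mono phiG) auto
    also have "\<dots> = cmod (pw j n / a (j + n)) * Crec powr (1/p) * T (j + n)"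
      by (simp add: norm_divide)
    also have "\<dots> = cmod (pv j n) / cmod (a j) * Crec powr (1/p) * T (j + n)"
      by (simp add: pw norm_divide)
    also have "\<dots> \<le> M0 / cmod (PP j) / cmod (a j) * Crec powr (1/p) * T (j + n)"
      using pvb Tn by (intro mult_right_mono divide_right_mono) auto
    finally show ?thesis by (simp add: K_def add.commute)
  qed
  have "(\<lambda>n. K * T (n + j)) \<longlonglongrightarrow> K * 0"
    by (intro tendsto_mult tendsto_const LIMSEQ_ignore_initial_segment[OF T])
  then have t0: "(\<lambda>n. K * T (n + j)) \<longlonglongrightarrow> 0" by simp
  have ev: "eventually (\<lambda>n. norm ((Fw_adj a b p w ^^ n) \<phi> (Gm j)) \<le> K * T (n + j)) sequentially"
    using bnd by (intro always_eventually allI) simp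
  show ?thesis by (rule Lim_null_comparison[OF ev t0])
qed

lemma Fb_Gm: "Fb n = (\<lambda>z. a n * Gm n z + b n * Gm (Suc n) z)"
  by (auto simp: Fb_def Gm_def fab_def algebra_simps)

lemma weak_imp_unb:
  assumes \<phi>: "\<phi> \<in> dual a b p" and \<psi>: "\<psi> \<in> dual a b p" and nz: "\<psi> \<noteq> (\<lambda>f. 0)"
    and sm: "strict_mono nk"
    and lim: "\<forall>\<Lambda>\<in>bidual a b p. (\<lambda>k. \<Lambda> ((Fw_adj a b p w ^^ nk k) \<phi>)) \<longlonglongrightarrow> \<Lambda> \<psi>"
  shows "\<not> bdd_above (range (\<lambda>n. cmod (PP n)))"
proof
  assume "bdd_above (range (\<lambda>n. cmod (PP n)))"
  then obtain M0 where M0: "\<And>n. cmod (PP n) \<le> M0" by (auto simp: bdd_above_def)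
  have blp: "bl \<psi>" by (rule dual_bl[OF \<psi>])
  have G0: "\<psi> (Gm j) = 0" for j
  proof -
    have "(\<lambda>k. (Fw_adj a b p w ^^ nk k) \<phi> (Gm j)) \<longlonglongrightarrow> \<psi> (Gm j)"
      using lim bidual_eval[OF Gm_in, of j] by auto
    moreover have "(\<lambda>k. (Fw_adj a b p w ^^ nk k) \<phi> (Gm j)) \<longlonglongrightarrow> 0"
      using LIMSEQ_subseq_LIMSEQ[OF Gm_val_tendsto[OF \<phi> M0] sm] by (simp add: o_def)
    ultimately show ?thesis by (rule LIMSEQ_unique)
  qed
  have c0: "dc \<psi> n = 0" for n
    unfolding dc_def Fb_Gm using bl_add[OF blp lpab_scale[OF Gm_in] lpab_scale[OF Gm_in]]
      bl_scale[OF blp Gm_in] G0 by simp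
  have "\<psi> f = 0" for f
  proof (cases "f \<in> lpab a b p")
    case True
    from dual_sums[OF blp True] have "(\<lambda>n. 0) sums \<psi> f" by (simp add: c0)
    then show ?thesis using sums_zero sums_unique2 by blast
  next
    case False then show ?thesis using \<psi> by (simp add: dual_iff)
  qed
  with nz show False by auto
qed

end


context HC begin

definition d0 :: "nat \<Rightarrow> complex" where "d0 n = (if n = 0 then 1 else 0)"
definition e0 where "e0 = phi d0"

lemma d0_lp: "lp q d0" by (rule fin_lp[of 1]) (use q in \<open>auto simp: d0_def\<close>)
lemma e0_dual: "e0 \<in> dual a b p" unfolding e0_def by (rule phi_dual[OF d0_lp])

lemma e0_Fb0: "e0 (Fb 0) = 1"
proof -
  have "(\<lambda>n. coefs a b p (Fb 0) n * cof d0 n) = (\<lambda>n. if n = 0 then 1 else 0)"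
    by (auto simp: coefs_eq[OF rep_Fb] cof_def d0_def)
  then have "(\<lambda>n. coefs a b p (Fb 0) n * cof d0 n) sums 1"
    using sums_single[of 0 "\<lambda>_. 1::complex"] by simp
  then show ?thesis unfolding e0_def using phi_sums[OF d0_lp Fb_in] by (metis sums_unique2)
qed

lemma e0_nz: "e0 \<noteq> (\<lambda>f. 0)" using e0_Fb0 by (metis zero_neq_one)

lemma dual_lin: "\<phi> \<in> dual a b p \<Longrightarrow> \<psi> \<in> dual a b p \<Longrightarrow> (\<lambda>f. \<phi> f + c * \<psi> f) \<in> dual a b p"
  using bl_lin[OF dual_bl dual_bl] by (auto simp: dual_iff)

lemma dual_minus: "\<phi> \<in> dual a b p \<Longrightarrow> \<psi> \<in> dual a b p \<Longrightarrow> (\<lambda>f. \<phi> f - \<psi> f) \<in> dual a b p"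
  using dual_lin[of \<phi> \<psi> "-1"] by simp

lemma finite_subsingleton: "(\<And>x y. x \<in> S \<Longrightarrow> y \<in> S \<Longrightarrow> x = y) \<Longrightarrow> finite S"
  by (metis finite.emptyI finite_insert insertI1 subsetI subset_singletonD finite_subset)

lemma inf_often:
  assumes \<phi>: "\<phi> \<in> dual a b p"
    and dense: "\<forall>\<psi>\<in>dual a b p. \<forall>e>0. \<exists>n. dual_norm a b p (\<lambda>f. (Fw_adj a b p w ^^ n) \<phi> f - \<psi> f) < e"
    and \<psi>: "\<psi> \<in> dual a b p" and \<epsilon>: "\<epsilon> > 0"
  shows "\<exists>n>N. dual_norm a b p (\<lambda>f. (Fw_adj a b p w ^^ n) \<phi> f - \<psi> f) < \<epsilon>"
proof -
  let ?F = "\<lambda>n. (Fw_adj a b p w ^^ n) \<phi>"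
  have Fd: "?F n \<in> dual a b p" for n by (rule Fw_adj_pow_dual[OF \<phi>])
  define U where "U = dual_norm a b p e0"
  have U0: "U \<ge> 0" unfolding U_def by (rule dual_norm_nonneg[OF dual_bl[OF e0_dual]])
  define c where "c i = \<epsilon> / (2 * (U + 1) * (real i + 1))" for i
  have cpos: "c i > 0" for i using \<epsilon> U0 by (simp add: c_def)
  have cinj: "c i = c i' \<Longrightarrow> i = i'" for i i'
  proof -
    assume "c i = c i'"
    then have "2 * (U + 1) * (real i + 1) = 2 * (U + 1) * (real i' + 1)"
      using \<epsilon> unfolding c_def divide_cancel_left by simp
    then have "real i + 1 = real i' + 1" using U0 by simp
    then show "i = i'" by simp
  qed
  define \<xi> where "\<xi> i = (\<lambda>f. \<psi> f + complex_of_real (c i) * e0 f)" for i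
  have \<xi>d: "\<xi> i \<in> dual a b p" for i unfolding \<xi>_def by (rule dual_lin[OF \<psi> e0_dual])
  have \<xi>\<psi>: "dual_norm a b p (\<lambda>f. \<xi> i f - \<psi> f) < \<epsilon> / 2" for i
  proof -
    have "dual_norm a b p (\<lambda>f. \<xi> i f - \<psi> f) \<le> c i * U"
    proof (rule dual_norm_le)
      show "0 \<le> c i * U" using cpos[of i] U0 by simp
      fix f assume f: "f \<in> lpab a b p"
      have "cmod (\<xi> i f - \<psi> f) = c i * cmod (e0 f)" using cpos[of i] by (simp add: \<xi>_def norm_mult)
      also have "\<dots> \<le> c i * (U * lpab_norm a b p f)"
        using dual_le[OF dual_bl[OF e0_dual] f] cpos[of i] by (intro mult_left_mono) (auto simp: U_def)
      finally show "cmod (\<xi> i f - \<psi> f) \<le> c i * U * lpab_norm a b p f" by (simp add: mult_ac)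
    qed
    also have "c i * U < \<epsilon> / 2"
    proof -
      have "c i * U = \<epsilon> / 2 * (U / ((U + 1) * (real i + 1)))" by (simp add: c_def field_simps)
      also have "U / ((U + 1) * (real i + 1)) < 1"
      proof -
        have "U < (U + 1) * 1" by simp
        also have "\<dots> \<le> (U + 1) * (real i + 1)" using U0 by (intro mult_left_mono) auto
        finally show ?thesis using U0 by (simp add: divide_less_eq)
      qed
      then have "\<epsilon> / 2 * (U / ((U + 1) * (real i + 1))) < \<epsilon> / 2 * 1"
        using \<epsilon> by (intro mult_strict_left_mono) auto
      finally show ?thesis by simp
    qed
    finally show ?thesis .
  qed
  define d where "d n i = dual_norm a b p (\<lambda>f. ?F n f - \<xi> i f)" for n i
  have dnn: "d n i \<ge> 0" for n i unfolding d_def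
    by (rule dual_norm_nonneg[OF bl_minus[OF dual_bl[OF Fd] dual_bl[OF \<xi>d]]])
  have uniq: "i = i'" if "d n i = 0" "d n i' = 0" for n i i'
  proof -
    have "dual_norm a b p (\<lambda>f. \<xi> i f - \<xi> i' f) \<le> dual_norm a b p (\<lambda>f. \<xi> i f - ?F n f) + dual_norm a b p (\<lambda>f. ?F n f - \<xi> i' f)"
      by (rule dual_norm_tri[OF dual_bl[OF \<xi>d] dual_bl[OF Fd] dual_bl[OF \<xi>d]])
    also have "dual_norm a b p (\<lambda>f. \<xi> i f - ?F n f) = d n i" unfolding d_def by (rule dual_norm_swap)
    finally have z: "dual_norm a b p (\<lambda>f. \<xi> i f - \<xi> i' f) \<le> 0" using that by (simp add: d_def)
    have "cmod (\<xi> i (Fb 0) - \<xi> i' (Fb 0)) \<le> dual_norm a b p (\<lambda>f. \<xi> i f - \<xi> i' f) * lpab_norm a b p (Fb 0)"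
      by (rule dual_le[OF bl_minus[OF dual_bl[OF \<xi>d] dual_bl[OF \<xi>d]] Fb_in])
    also have "\<dots> \<le> 0" using z lpab_norm_nonneg[OF Fb_in] by (simp add: mult_nonpos_nonneg)
    finally have "\<xi> i (Fb 0) = \<xi> i' (Fb 0)" by simp
    then have "c i = c i'" by (simp add: \<xi>_def e0_Fb0)
    then show ?thesis by (rule cinj)
  qed
  have fin: "finite {i. \<exists>n\<le>N. d n i = 0}"
  proof (rule finite_subset)
    show "{i. \<exists>n\<le>N. d n i = 0} \<subseteq> (\<Union>n\<in>{..N}. {i. d n i = 0})" by auto
    show "finite (\<Union>n\<in>{..N}. {i. d n i = 0})"
      by (intro finite_UN_I finite_atMost finite_subsingleton) (auto intro: uniq)
  qed
  obtain i where i: "i \<notin> {i. \<exists>n\<le>N. d n i = 0}"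
    using ex_new_if_finite[OF infinite_UNIV_nat fin] by blast
  have dpos: "d n i > 0" if "n \<le> N" for n using i that dnn[of n i] by force
  define \<delta> where "\<delta> = min (\<epsilon> / 2) (Min ((\<lambda>n. d n i) ` {..N}))"
  have \<delta>: "\<delta> > 0" unfolding \<delta>_def using \<epsilon> dpos by (simp add: Min_gr_iff)
  obtain n where n: "d n i < \<delta>" using dense \<xi>d[of i] \<delta> unfolding d_def by blast
  have nN: "n > N"
  proof (rule ccontr)
    assume "\<not> n > N"
    then have "Min ((\<lambda>n. d n i) ` {..N}) \<le> d n i" by (intro Min_le) auto
    moreover have "\<delta> \<le> Min ((\<lambda>n. d n i) ` {..N})" by (simp add: \<delta>_def)
    ultimately show False using n by linarith
  qed
  have "dual_norm a b p (\<lambda>f. ?F n f - \<psi> f) \<le> d n i + dual_norm a b p (\<lambda>f. \<xi> i f - \<psi> f)"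
    unfolding d_def by (rule dual_norm_tri[OF dual_bl[OF Fd] dual_bl[OF \<xi>d] dual_bl[OF \<psi>]])
  also have "\<dots> < \<epsilon>" using n \<xi>\<psi>[of i] by (simp add: \<delta>_def)
  finally show ?thesis using nN by blast
qed

definition selN where "selN \<phi> N k = (SOME n. n > N \<and> dual_norm a b p (\<lambda>f. (Fw_adj a b p w ^^ n) \<phi> f - e0 f) < inverse (real (Suc k)))"

primrec nkseq where
  "nkseq \<phi> 0 = selN \<phi> 0 0"
| "nkseq \<phi> (Suc k) = selN \<phi> (nkseq \<phi> k) (Suc k)"

lemma hyp_imp_norm:
  assumes "adj_hypercyclic a b p w"
  shows "\<exists>\<phi>\<in>dual a b p. \<exists>\<psi>\<in>dual a b p. \<exists>nk :: nat \<Rightarrow> nat. \<psi> \<noteq> (\<lambda>f. 0) \<and> strict_mono nk \<and>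
               (\<lambda>k. dual_norm a b p (\<lambda>f. (Fw_adj a b p w ^^ nk k) \<phi> f - \<psi> f)) \<longlonglongrightarrow> 0"
proof -
  obtain \<phi> where \<phi>: "\<phi> \<in> dual a b p"
    and dense: "\<forall>\<psi>\<in>dual a b p. \<forall>e>0. \<exists>n. dual_norm a b p (\<lambda>f. (Fw_adj a b p w ^^ n) \<phi> f - \<psi> f) < e"
    using assms unfolding adj_hypercyclic_def by blast
  have sel: "selN \<phi> N k > N \<and> dual_norm a b p (\<lambda>f. (Fw_adj a b p w ^^ selN \<phi> N k) \<phi> f - e0 f) < inverse (real (Suc k))" for N k
  proof -
    have "\<exists>n>N. dual_norm a b p (\<lambda>f. (Fw_adj a b p w ^^ n) \<phi> f - e0 f) < inverse (real (Suc k))"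
      by (rule inf_often[OF \<phi> dense e0_dual]) simp
    from someI_ex[OF this[unfolded Bex_def]] show ?thesis unfolding selN_def by blast
  qed
  have sm: "strict_mono (nkseq \<phi>)" unfolding strict_mono_Suc_iff using sel by simp
  have bnd: "dual_norm a b p (\<lambda>f. (Fw_adj a b p w ^^ nkseq \<phi> k) \<phi> f - e0 f) < inverse (real (Suc k))" for k
  proof (cases k)
    case 0 then show ?thesis using sel[of 0 0] by simp
  next
    case (Suc m) then show ?thesis using sel[of "nkseq \<phi> m" "Suc m"] by simp
  qed
  have "(\<lambda>k. dual_norm a b p (\<lambda>f. (Fw_adj a b p w ^^ nkseq \<phi> k) \<phi> f - e0 f)) \<longlonglongrightarrow> 0"
  proof (rule Lim_null_comparison[OF _ LIMSEQ_inverse_real_of_nat])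
    show "eventually (\<lambda>k. norm (dual_norm a b p (\<lambda>f. (Fw_adj a b p w ^^ nkseq \<phi> k) \<phi> f - e0 f)) \<le> inverse (real (Suc k))) sequentially"
    proof (intro always_eventually allI)
      fix k
      have "dual_norm a b p (\<lambda>f. (Fw_adj a b p w ^^ nkseq \<phi> k) \<phi> f - e0 f) \<ge> 0"
        by (rule dual_norm_nonneg[OF bl_minus[OF dual_bl[OF Fw_adj_pow_dual[OF \<phi>]] dual_bl[OF e0_dual]]])
      then show "norm (dual_norm a b p (\<lambda>f. (Fw_adj a b p w ^^ nkseq \<phi> k) \<phi> f - e0 f)) \<le> inverse (real (Suc k))"
        using bnd[of k] by simp
    qed
  qed
  then show ?thesis using \<phi> e0_dual e0_nz sm by blast
qed

lemma norm_imp_weak: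
  assumes \<phi>: "\<phi> \<in> dual a b p" and \<psi>: "\<psi> \<in> dual a b p"
    and lim: "(\<lambda>k. dual_norm a b p (\<lambda>f. (Fw_adj a b p w ^^ nk k) \<phi> f - \<psi> f)) \<longlonglongrightarrow> 0"
  shows "\<forall>\<Lambda>\<in>bidual a b p. (\<lambda>k. \<Lambda> ((Fw_adj a b p w ^^ nk k) \<phi>)) \<longlonglongrightarrow> \<Lambda> \<psi>"
proof
  fix \<Lambda> assume \<Lambda>: "\<Lambda> \<in> bidual a b p"
  obtain C where C: "\<And>\<theta>. \<theta> \<in> dual a b p \<Longrightarrow> cmod (\<Lambda> \<theta>) \<le> C * dual_norm a b p \<theta>"
    using \<Lambda> unfolding bidual_def by blast
  have add: "\<And>\<theta>1 \<theta>2. \<theta>1 \<in> dual a b p \<Longrightarrow> \<theta>2 \<in> dual a b p \<Longrightarrow> \<Lambda> (\<lambda>f. \<theta>1 f + \<theta>2 f) = \<Lambda> \<theta>1 + \<Lambda> \<theta>2"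
    and scl: "\<And>c \<theta>. \<theta> \<in> dual a b p \<Longrightarrow> \<Lambda> (\<lambda>f. c * \<theta> f) = c * \<Lambda> \<theta>"
    using \<Lambda> unfolding bidual_def by blast+
  let ?A = "\<lambda>k. (Fw_adj a b p w ^^ nk k) \<phi>"
  have Ad: "?A k \<in> dual a b p" for k by (rule Fw_adj_pow_dual[OF \<phi>])
  have m\<psi>: "(\<lambda>f. -1 * \<psi> f) \<in> dual a b p" using dual_lin[OF \<psi> \<psi>, of "-2"] by (simp add: algebra_simps)
  have diff: "\<Lambda> (?A k) - \<Lambda> \<psi> = \<Lambda> (\<lambda>f. ?A k f - \<psi> f)" for k
  proof -
    have "\<Lambda> (\<lambda>f. ?A k f + (-1) * \<psi> f) = \<Lambda> (?A k) + \<Lambda> (\<lambda>f. -1 * \<psi> f)"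
      using add[OF Ad m\<psi>] by simp
    also have "\<Lambda> (\<lambda>f. -1 * \<psi> f) = - \<Lambda> \<psi>" using scl[OF \<psi>, of "-1"] by simp
    finally show ?thesis by simp
  qed
  have "(\<lambda>k. C * dual_norm a b p (\<lambda>f. ?A k f - \<psi> f)) \<longlonglongrightarrow> C * 0"
    by (intro tendsto_mult tendsto_const lim)
  then have t: "(\<lambda>k. C * dual_norm a b p (\<lambda>f. ?A k f - \<psi> f)) \<longlonglongrightarrow> 0" by simp
  have ev: "eventually (\<lambda>k. norm (\<Lambda> (?A k) - \<Lambda> \<psi>) \<le> C * dual_norm a b p (\<lambda>f. ?A k f - \<psi> f)) sequentially"
    by (intro always_eventually allI) (simp add: diff C[OF dual_minus[OF Ad \<psi>]])
  have "(\<lambda>k. \<Lambda> (?A k) - \<Lambda> \<psi>) \<longlonglongrightarrow> 0" by (rule Lim_null_comparison[OF ev t])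
  then show "(\<lambda>k. \<Lambda> (?A k)) \<longlonglongrightarrow> \<Lambda> \<psi>" by (rule LIM_zero_cancel)
qed

end

theorem mainTheorem12:
  fixes a b w :: "nat \<Rightarrow> complex" and p :: real
  assumes "1 < p"
    and "\<And>n. a n \<noteq> 0" and "\<And>n. b n \<noteq> 0"
    and "limsup (\<lambda>n. ereal ((cmod (a n) + cmod (b n)) powr (1 / real n))) < \<infinity>"
    and "\<And>n. w n \<noteq> 0"
    and "bdd_above (range (\<lambda>n. cmod (w n * a n / a (Suc n))))"
    and "limsup (\<lambda>n. ereal (cmod (b n / a (Suc n)))) < 1"
  shows "(adj_hypercyclic a b p w \<longleftrightarrow>
            (\<exists>\<phi>\<in>dual a b p. \<exists>\<psi>\<in>dual a b p. \<exists>nk :: nat \<Rightarrow> nat. \<psi> \<noteq> (\<lambda>f. 0) \<and> strict_mono nk \<and>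
               (\<forall>\<Lambda>\<in>bidual a b p. (\<lambda>k. \<Lambda> ((Fw_adj a b p w ^^ nk k) \<phi>)) \<longlonglongrightarrow> \<Lambda> \<psi>)))
       \<and> ((\<exists>\<phi>\<in>dual a b p. \<exists>\<psi>\<in>dual a b p. \<exists>nk :: nat \<Rightarrow> nat. \<psi> \<noteq> (\<lambda>f. 0) \<and> strict_mono nk \<and>
               (\<forall>\<Lambda>\<in>bidual a b p. (\<lambda>k. \<Lambda> ((Fw_adj a b p w ^^ nk k) \<phi>)) \<longlonglongrightarrow> \<Lambda> \<psi>))
          \<longleftrightarrow>
           (\<exists>\<phi>\<in>dual a b p. \<exists>\<psi>\<in>dual a b p. \<exists>nk :: nat \<Rightarrow> nat. \<psi> \<noteq> (\<lambda>f. 0) \<and> strict_mono nk \<and>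
               (\<lambda>k. dual_norm a b p (\<lambda>f. (Fw_adj a b p w ^^ nk k) \<phi> f - \<psi> f)) \<longlonglongrightarrow> 0))"
proof -
  interpret HC a b w p using assms by unfold_locales auto
  let ?W = "\<exists>\<phi>\<in>dual a b p. \<exists>\<psi>\<in>dual a b p. \<exists>nk :: nat \<Rightarrow> nat. \<psi> \<noteq> (\<lambda>f. 0) \<and> strict_mono nk \<and>
               (\<forall>\<Lambda>\<in>bidual a b p. (\<lambda>k. \<Lambda> ((Fw_adj a b p w ^^ nk k) \<phi>)) \<longlonglongrightarrow> \<Lambda> \<psi>)"
  let ?N = "\<exists>\<phi>\<in>dual a b p. \<exists>\<psi>\<in>dual a b p. \<exists>nk :: nat \<Rightarrow> nat. \<psi> \<noteq> (\<lambda>f. 0) \<and> strict_mono nk \<and>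
               (\<lambda>k. dual_norm a b p (\<lambda>f. (Fw_adj a b p w ^^ nk k) \<phi> f - \<psi> f)) \<longlonglongrightarrow> 0"
  have iN: "adj_hypercyclic a b p w \<Longrightarrow> ?N" by (rule hyp_imp_norm)
  have NW: "?N \<Longrightarrow> ?W" using norm_imp_weak by blast
  have Wi: "?W \<Longrightarrow> adj_hypercyclic a b p w" using weak_imp_unb hyp_from_unb by blast
  show ?thesis using iN NW Wi by blast
qed


end
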